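(* Let $\mathcal{L}_\land\subseteq\{\land,\lor,\to,\lnot,0,1\}$ be a language containing $\land$ and $\Phi$ a Sahlqvist quasiequation in $\mathcal{L}_\land$. For every $\mathcal{L}_\land$-subreduct $\boldsymbol{A}$ of a Heyting algebra, $\boldsymbol{A}\vDash\Phi$ if and only if $\boldsymbol{A}_\ast\vDash\mathsf{tr}(\Phi)$.
   Context: Formulas over variables with $\land,\lor,\to,\lnot,0,1$. An occurrence of a variable is positive (negative) if the number of negations and antecedents of implications in whose scope it lies is even (odd); a formula is positive (negative) if all its variable occurrences are. A Sahlqvist antecedent is built from variables, negative formulas and $0,1$ using only $\land,\lor$. A Sahlqvist implication is a positive formula, or $\lnot\varphi$ with $\varphi$ a Sahlqvist antecedent, or $\varphi\to\psi$ with $\varphi$ a Sahlqvist antecedent and $\psi$ positive. A Sahlqvist quasiequation is $\varphi_1\land y\le z\,\&\cdots\&\,\varphi_n\land y\le z\Longrightarrow y\le z$ (universally quantified), with $y,z$ distinct variables not in the $\varphi_i$, each $\varphi_i$ built from Sahlqvist implications using only $\land,\lor$, and $a\le b$ meaning $a\land b\approx a$; it is in $\mathcal{L}_\land$ if all symbols of the $\varphi_i$ lie in $\mathcal{L}_\land$. For a poset $\mathbb{X}$, $\mathsf{Up}(\mathbb{X})$ is the Heyting algebra of upsets $\langle\mathsf{Up}(\mathbb{X});\cap,\cup,\to,\emptyset,X\rangle$ with $U\to V=X\smallsetminus{\downarrow}(U\smallsetminus V)$. For each Sahlqvist quasiequation $\Phi$, $\mathsf{tr}(\Phi)$ is the effectively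 computable first-order sentence in the language of posets (the Sahlqvist correspondent of the Gödel–McKinsey–Tarski translation of $\Phi$) satisfying, for every poset $\mathbb{X}$: $\mathsf{Up}(\mathbb{X})\vDash\Phi$ iff $\mathbb{X}\vDash\mathsf{tr}(\Phi)$. An $\mathcal{L}_\land$-subreduct of a Heyting algebra is a subalgebra of its $\mathcal{L}_\land$-reduct; for it, $\boldsymbol{A}_\ast$ is the poset (under inclusion) of meet irreducible filters, where a filter is a nonempty upset (w.r.t. $a\le b\iff a\land b=a$) closed under $\land$, meet irreducible if proper and not the intersection of two filters both different from it. *)

theory Defs
  imports Main
begin

datatype form =
    FVar nat
  | FAnd form form
  | FOr form form
  | FImp form form
  | FNeg form
  | FBot
  | FTop

datatype sym = SAnd | SOr | SImp | SNeg | SBot | STop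

fun syms :: "form \<Rightarrow> sym set" where
  "syms (FVar x) = {}"
| "syms (FAnd a b) = {SAnd} \<union> syms a \<union> syms b"
| "syms (FOr a b) = {SOr} \<union> syms a \<union> syms b"
| "syms (FImp a b) = {SImp} \<union> syms a \<union> syms b"
| "syms (FNeg a) = {SNeg} \<union> syms a"
| "syms FBot = {SBot}"
| "syms FTop = {STop}"

fun vars :: "form \<Rightarrow> nat set" where
  "vars (FVar x) = {x}"
| "vars (FAnd a b) = vars a \<union> vars b"
| "vars (FOr a b) = vars a \<union> vars b"
| "vars (FImp a b) = vars a \<union> vars b"
| "vars (FNeg a) = vars a"
| "vars FBot = {}"
| "vars FTop = {}"

fun positive :: "form \<Rightarrow> bool" and negative :: "form \<Rightarrow> bool" where
  "positive (FVar x) = True"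
| "positive (FAnd a b) = (positive a \<and> positive b)"
| "positive (FOr a b) = (positive a \<and> positive b)"
| "positive (FImp a b) = (negative a \<and> positive b)"
| "positive (FNeg a) = negative a"
| "positive FBot = True"
| "positive FTop = True"
| "negative (FVar x) = False"
| "negative (FAnd a b) = (negative a \<and> negative b)"
| "negative (FOr a b) = (negative a \<and> negative b)"
| "negative (FImp a b) = (positive a \<and> negative b)"
| "negative (FNeg a) = positive a"
| "negative FBot = True"
| "negative FTop = True"

inductive sahlqvist_antecedent :: "form \<Rightarrow> bool" where
  sa_var: "sahlqvist_antecedent (FVar x)"
| sa_neg: "negative \<phi> \<Longrightarrow> sahlqvist_antecedent \<phi>"
| sa_bot: "sahlqvist_antecedent FBot"
| sa_top: "sahlqvist_antecedent FTop"
| sa_and: "sahlqvist_antecedent \<phi> \<Longrightarrow> sahlqvist_antecedent \<psi> \<Longrightarrow> sahlqvist_antecedent (FAnd \<phi> \<psi>)"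
| sa_or: "sahlqvist_antecedent \<phi> \<Longrightarrow> sahlqvist_antecedent \<psi> \<Longrightarrow> sahlqvist_antecedent (FOr \<phi> \<psi>)"

definition sahlqvist_implication :: "form \<Rightarrow> bool" where
  "sahlqvist_implication \<chi> \<longleftrightarrow>
     positive \<chi>
   \<or> (\<exists>\<phi>. \<chi> = FNeg \<phi> \<and> sahlqvist_antecedent \<phi>)
   \<or> (\<exists>\<phi> \<psi>. \<chi> = FImp \<phi> \<psi> \<and> sahlqvist_antecedent \<phi> \<and> positive \<psi>)"

inductive sahlqvist_body :: "form \<Rightarrow> bool" where
  sb_imp: "sahlqvist_implication \<phi> \<Longrightarrow> sahlqvist_body \<phi>"
| sb_and: "sahlqvist_body \<phi> \<Longrightarrow> sahlqvist_body \<psi> \<Longrightarrow> sahlqvist_body (FAnd \<phi> \<psi>)"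
| sb_or: "sahlqvist_body \<phi> \<Longrightarrow> sahlqvist_body \<psi> \<Longrightarrow> sahlqvist_body (FOr \<phi> \<psi>)"

text \<open>The quasiequation  phi_1 and y <= z & ... & phi_n and y <= z ==> y <= z
  is represented by the list [phi_1,...,phi_n] and the variables y, z.\<close>
datatype qeq = QEq "form list" nat nat

fun sahlqvist_qeq :: "qeq \<Rightarrow> bool" where
  "sahlqvist_qeq (QEq \<phi>s y z) \<longleftrightarrow>
     \<phi>s \<noteq> [] \<and> y \<noteq> z \<and>
     (\<forall>\<phi> \<in> set \<phi>s. sahlqvist_body \<phi> \<and> y \<notin> vars \<phi> \<and> z \<notin> vars \<phi>)"

fun qeq_in_language :: "sym set \<Rightarrow> qeq \<Rightarrow> bool" where
  "qeq_in_language L (QEq \<phi>s y z) \<longleftrightarrow> (\<forall>\<phi> \<in> set \<phi>s. syms \<phi> \<subseteq> L)"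

record 'a alg =
  carrier :: "'a set"
  meet :: "'a \<Rightarrow> 'a \<Rightarrow> 'a"
  join :: "'a \<Rightarrow> 'a \<Rightarrow> 'a"
  imp :: "'a \<Rightarrow> 'a \<Rightarrow> 'a"
  neg :: "'a \<Rightarrow> 'a"
  bot :: "'a"
  top :: "'a"

fun eval :: "'a alg \<Rightarrow> (nat \<Rightarrow> 'a) \<Rightarrow> form \<Rightarrow> 'a" where
  "eval H v (FVar x) = v x"
| "eval H v (FAnd a b) = meet H (eval H v a) (eval H v b)"
| "eval H v (FOr a b) = join H (eval H v a) (eval H v b)"
| "eval H v (FImp a b) = imp H (eval H v a) (eval H v b)"
| "eval H v (FNeg a) = neg H (eval H v a)"
| "eval H v FBot = bot H"
| "eval H v FTop = top H"

definition alg_le :: "'a alg \<Rightarrow> 'a \<Rightarrow> 'a \<Rightarrow> bool" where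
  "alg_le H a b \<longleftrightarrow> meet H a b = a"

text \<open>Validity of a quasiequation in the algebra with operations of H and universe S
  (the universally quantified variables range over S).\<close>
fun qeq_valid :: "'a alg \<Rightarrow> 'a set \<Rightarrow> qeq \<Rightarrow> bool" where
  "qeq_valid H S (QEq \<phi>s y z) \<longleftrightarrow>
     (\<forall>v. (\<forall>x. v x \<in> S) \<longrightarrow>
        (\<forall>\<phi> \<in> set \<phi>s. alg_le H (meet H (eval H v \<phi>) (v y)) (v z)) \<longrightarrow>
        alg_le H (v y) (v z))"

definition heyting_algebra :: "'a alg \<Rightarrow> bool" where
  "heyting_algebra H \<longleftrightarrow>
     (let C = carrier H; le = alg_le H in
      bot H \<in> C \<and> top H \<in> C \<and>
      (\<forall>a\<in>C. \<forall>b\<in>C. meet H a b \<in> C \<and> join H a b \<in> C \<and> imp H a b \<in> C) \<and>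
      (\<forall>a\<in>C. neg H a \<in> C) \<and>
      (\<forall>a\<in>C. \<forall>b\<in>C. meet H a b = meet H b a \<and> join H a b = join H b a) \<and>
      (\<forall>a\<in>C. \<forall>b\<in>C. \<forall>c\<in>C. meet H (meet H a b) c = meet H a (meet H b c)
                       \<and> join H (join H a b) c = join H a (join H b c)) \<and>
      (\<forall>a\<in>C. \<forall>b\<in>C. meet H a (join H a b) = a \<and> join H a (meet H a b) = a) \<and>
      (\<forall>a\<in>C. le (bot H) a \<and> le a (top H)) \<and>
      (\<forall>a\<in>C. \<forall>b\<in>C. \<forall>c\<in>C. le (meet H c a) b \<longleftrightarrow> le c (imp H a b)) \<and>
      (\<forall>a\<in>C. neg H a = imp H a (bot H)))"

definition subreduct :: "sym set \<Rightarrow> 'a alg \<Rightarrow> 'a set \<Rightarrow> bool" where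
  "subreduct L H S \<longleftrightarrow>
     heyting_algebra H \<and> S \<subseteq> carrier H \<and> S \<noteq> {} \<and>
     (SAnd \<in> L \<longrightarrow> (\<forall>a\<in>S. \<forall>b\<in>S. meet H a b \<in> S)) \<and>
     (SOr \<in> L \<longrightarrow> (\<forall>a\<in>S. \<forall>b\<in>S. join H a b \<in> S)) \<and>
     (SImp \<in> L \<longrightarrow> (\<forall>a\<in>S. \<forall>b\<in>S. imp H a b \<in> S)) \<and>
     (SNeg \<in> L \<longrightarrow> (\<forall>a\<in>S. neg H a \<in> S)) \<and>
     (SBot \<in> L \<longrightarrow> bot H \<in> S) \<and>
     (STop \<in> L \<longrightarrow> top H \<in> S)"

definition is_filter :: "'a alg \<Rightarrow> 'a set \<Rightarrow> 'a set \<Rightarrow> bool" where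
  "is_filter H S F \<longleftrightarrow>
     F \<subseteq> S \<and> F \<noteq> {} \<and>
     (\<forall>a\<in>F. \<forall>b\<in>S. alg_le H a b \<longrightarrow> b \<in> F) \<and>
     (\<forall>a\<in>F. \<forall>b\<in>F. meet H a b \<in> F)"

definition meet_irreducible_filter :: "'a alg \<Rightarrow> 'a set \<Rightarrow> 'a set \<Rightarrow> bool" where
  "meet_irreducible_filter H S F \<longleftrightarrow>
     is_filter H S F \<and> F \<noteq> S \<and>
     \<not> (\<exists>G1 G2. is_filter H S G1 \<and> is_filter H S G2 \<and> G1 \<noteq> F \<and> G2 \<noteq> F \<and> F = G1 \<inter> G2)"

text \<open>Universe of A_*; its order is set inclusion.\<close>
definition dual_poset :: "'a alg \<Rightarrow> 'a set \<Rightarrow> 'a set set" where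
  "dual_poset H S = {F. meet_irreducible_filter H S F}"

definition is_poset :: "'b set \<Rightarrow> ('b \<Rightarrow> 'b \<Rightarrow> bool) \<Rightarrow> bool" where
  "is_poset X le \<longleftrightarrow>
     (\<forall>x\<in>X. le x x) \<and>
     (\<forall>x\<in>X. \<forall>y\<in>X. le x y \<and> le y x \<longrightarrow> x = y) \<and>
     (\<forall>x\<in>X. \<forall>y\<in>X. \<forall>z\<in>X. le x y \<and> le y z \<longrightarrow> le x z)"

definition upsets :: "'b set \<Rightarrow> ('b \<Rightarrow> 'b \<Rightarrow> bool) \<Rightarrow> 'b set set" where
  "upsets X le = {U. U \<subseteq> X \<and> (\<forall>x\<in>U. \<forall>y\<in>X. le x y \<longrightarrow> y \<in> U)}"

definition downclosure :: "'b set \<Rightarrow> ('b \<Rightarrow> 'b \<Rightarrow> bool) \<Rightarrow> 'b set \<Rightarrow> 'b set" where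
  "downclosure X le U = {x\<in>X. \<exists>u\<in>U. le x u}"

definition Up :: "'b set \<Rightarrow> ('b \<Rightarrow> 'b \<Rightarrow> bool) \<Rightarrow> 'b set alg" where
  "Up X le =
     \<lparr> carrier = upsets X le,
       meet = (\<inter>), join = (\<union>),
       imp = (\<lambda>U V. X - downclosure X le (U - V)),
       neg = (\<lambda>U. X - downclosure X le U),
       bot = {}, top = X \<rparr>"

datatype fo =
    FO_Le nat nat
  | FO_Eq nat nat
  | FO_Not fo
  | FO_Conj fo fo
  | FO_Disj fo fo
  | FO_Impl fo fo
  | FO_Ex nat fo
  | FO_All nat fo

fun fo_free :: "fo \<Rightarrow> nat set" where
  "fo_free (FO_Le x y) = {x, y}"
| "fo_free (FO_Eq x y) = {x, y}"
| "fo_free (FO_Not a) = fo_free a"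
| "fo_free (FO_Conj a b) = fo_free a \<union> fo_free b"
| "fo_free (FO_Disj a b) = fo_free a \<union> fo_free b"
| "fo_free (FO_Impl a b) = fo_free a \<union> fo_free b"
| "fo_free (FO_Ex x a) = fo_free a - {x}"
| "fo_free (FO_All x a) = fo_free a - {x}"

definition fo_sentence :: "fo \<Rightarrow> bool" where
  "fo_sentence \<tau> \<longleftrightarrow> fo_free \<tau> = {}"

fun fo_holds :: "'b set \<Rightarrow> ('b \<Rightarrow> 'b \<Rightarrow> bool) \<Rightarrow> (nat \<Rightarrow> 'b) \<Rightarrow> fo \<Rightarrow> bool" where
  "fo_holds X le g (FO_Le x y) = le (g x) (g y)"
| "fo_holds X le g (FO_Eq x y) = (g x = g y)"
| "fo_holds X le g (FO_Not a) = (\<not> fo_holds X le g a)"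
| "fo_holds X le g (FO_Conj a b) = (fo_holds X le g a \<and> fo_holds X le g b)"
| "fo_holds X le g (FO_Disj a b) = (fo_holds X le g a \<or> fo_holds X le g b)"
| "fo_holds X le g (FO_Impl a b) = (fo_holds X le g a \<longrightarrow> fo_holds X le g b)"
| "fo_holds X le g (FO_Ex x a) = (\<exists>d\<in>X. fo_holds X le (g(x := d)) a)"
| "fo_holds X le g (FO_All x a) = (\<forall>d\<in>X. fo_holds X le (g(x := d)) a)"

text \<open>Satisfaction of a sentence (the assignment is irrelevant for sentences).\<close>
definition fo_models :: "'b set \<Rightarrow> ('b \<Rightarrow> 'b \<Rightarrow> bool) \<Rightarrow> fo \<Rightarrow> bool" where
  "fo_models X le \<tau> \<longleftrightarrow> fo_holds X le (\<lambda>_. undefined) \<tau>"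

definition correspondent :: "'b itself \<Rightarrow> qeq \<Rightarrow> fo \<Rightarrow> bool" where
  "correspondent _ \<Phi> \<tau> \<longleftrightarrow>
     fo_sentence \<tau> \<and>
     (\<forall>(X::'b set) le. is_poset X le \<longrightarrow>
        (qeq_valid (Up X le) (upsets X le) \<Phi> \<longleftrightarrow> fo_models X le \<tau>))"

end

theory Submission
  imports Defs
begin

locale HA =
  fixes H :: "'a alg"
  assumes ha: "heyting_algebra H"
begin

abbreviation "C \<equiv> carrier H"
abbreviation "m \<equiv> meet H"
abbreviation "j \<equiv> join H"
abbreviation "i \<equiv> imp H"
abbreviation "le \<equiv> alg_le H"

lemma bot_C: "bot H \<in> C" and top_C: "top H \<in> C"
  using ha unfolding heyting_algebra_def Let_def by blast+

lemma m_C: "a \<in> C \<Longrightarrow> b \<in> C \<Longrightarrow> m a b \<in> C"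
  and j_C: "a \<in> C \<Longrightarrow> b \<in> C \<Longrightarrow> j a b \<in> C"
  and i_C: "a \<in> C \<Longrightarrow> b \<in> C \<Longrightarrow> i a b \<in> C"
  and n_C: "a \<in> C \<Longrightarrow> neg H a \<in> C"
  using ha unfolding heyting_algebra_def Let_def by blast+

lemma m_comm: "a \<in> C \<Longrightarrow> b \<in> C \<Longrightarrow> m a b = m b a"
  and j_comm: "a \<in> C \<Longrightarrow> b \<in> C \<Longrightarrow> j a b = j b a"
  using ha unfolding heyting_algebra_def Let_def by blast+

lemma m_assoc: "a \<in> C \<Longrightarrow> b \<in> C \<Longrightarrow> c \<in> C \<Longrightarrow> m (m a b) c = m a (m b c)"
  and j_assoc: "a \<in> C \<Longrightarrow> b \<in> C \<Longrightarrow> c \<in> C \<Longrightarrow> j (j a b) c = j a (j b c)"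
  using ha unfolding heyting_algebra_def Let_def by blast+

lemma absorb1: "a \<in> C \<Longrightarrow> b \<in> C \<Longrightarrow> m a (j a b) = a"
  and absorb2: "a \<in> C \<Longrightarrow> b \<in> C \<Longrightarrow> j a (m a b) = a"
  using ha unfolding heyting_algebra_def Let_def by blast+

lemma le_bot: "a \<in> C \<Longrightarrow> le (bot H) a" and le_top: "a \<in> C \<Longrightarrow> le a (top H)"
  using ha unfolding heyting_algebra_def Let_def by blast+

lemma resid: "a \<in> C \<Longrightarrow> b \<in> C \<Longrightarrow> c \<in> C \<Longrightarrow> le (m c a) b \<longleftrightarrow> le c (i a b)"
  using ha unfolding heyting_algebra_def Let_def by blast+

lemma neg_eq: "a \<in> C \<Longrightarrow> neg H a = i a (bot H)"
  using ha unfolding heyting_algebra_def Let_def by blast+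

lemma m_idem: "a \<in> C \<Longrightarrow> m a a = a"
proof -
  assume a: "a \<in> C"
  have "j a (m a a) = a" using a absorb2 by blast
  hence "m a a = m a (j a (m a a))" by simp
  also have "\<dots> = a" using a absorb1 m_C by blast
  finally show ?thesis .
qed

lemma le_refl: "a \<in> C \<Longrightarrow> le a a"
  by (simp add: alg_le_def m_idem)

lemma le_antisym: "a \<in> C \<Longrightarrow> b \<in> C \<Longrightarrow> le a b \<Longrightarrow> le b a \<Longrightarrow> a = b"
  unfolding alg_le_def using m_comm by force

lemma le_trans: "a \<in> C \<Longrightarrow> b \<in> C \<Longrightarrow> c \<in> C \<Longrightarrow> le a b \<Longrightarrow> le b c \<Longrightarrow> le a c"
  unfolding alg_le_def proof -
  assume C: "a \<in> C" "b \<in> C" "c \<in> C" and h: "m a b = a" "m b c = b"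
  have "m a c = m (m a b) c" using h by simp
  also have "\<dots> = m a (m b c)" using C by (simp add: m_assoc)
  finally show "m a c = a" using h by simp
qed

lemma m_le1: "a \<in> C \<Longrightarrow> b \<in> C \<Longrightarrow> le (m a b) a"
proof -
  assume C: "a \<in> C" "b \<in> C"
  have "m (m a b) a = m a (m a b)" using C by (simp add: m_C m_comm)
  also have "\<dots> = m (m a a) b" using C by (simp add: m_assoc)
  finally show ?thesis using C by (simp add: alg_le_def m_idem)
qed

lemma m_le2: "a \<in> C \<Longrightarrow> b \<in> C \<Longrightarrow> le (m a b) b"
proof -
  assume C: "a \<in> C" "b \<in> C"
  have "m (m a b) b = m a (m b b)" using C by (simp add: m_assoc)
  thus ?thesis using C by (simp add: alg_le_def m_idem)
qed

lemma m_glb: "a \<in> C \<Longrightarrow> b \<in> C \<Longrightarrow> c \<in> C \<Longrightarrow> le c a \<Longrightarrow> le c b \<Longrightarrow> le c (m a b)"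
  unfolding alg_le_def proof -
  assume C: "a \<in> C" "b \<in> C" "c \<in> C" and h: "m c a = c" "m c b = c"
  have "m c (m a b) = m (m c a) b" using C by (simp add: m_assoc)
  thus "m c (m a b) = c" using h by simp
qed

lemma le_j_iff: "a \<in> C \<Longrightarrow> b \<in> C \<Longrightarrow> le a b \<longleftrightarrow> j a b = b"
  unfolding alg_le_def proof
  assume C: "a \<in> C" "b \<in> C"
  { assume h: "m a b = a"
    have "j a b = j b a" using C j_comm by blast
    also have "\<dots> = j b (m b a)" using h C m_comm by simp
    also have "\<dots> = b" using C absorb2 by blast
    finally show "j a b = b" . }
  { assume h: "j a b = b"
    have "m a b = m a (j a b)" using h by simp
    also have "\<dots> = a" using C absorb1 by blast
    finally show "m a b = a" . }
qed

lemma le_j1: "a \<in> C \<Longrightarrow> b \<in> C \<Longrightarrow> le a (j a b)"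
  unfolding alg_le_def by (simp add: absorb1)

lemma le_j2: "a \<in> C \<Longrightarrow> b \<in> C \<Longrightarrow> le b (j a b)"
  using le_j1[of b a] j_comm[of a b] by simp

lemma j_lub: "a \<in> C \<Longrightarrow> b \<in> C \<Longrightarrow> c \<in> C \<Longrightarrow> le a c \<Longrightarrow> le b c \<Longrightarrow> le (j a b) c"
proof -
  assume C: "a \<in> C" "b \<in> C" "c \<in> C" and h: "le a c" "le b c"
  have "j (j a b) c = j a (j b c)" using C j_assoc by blast
  also have "\<dots> = c" using h C le_j_iff by simp
  finally show ?thesis using C le_j_iff j_C by blast
qed

lemma mp: "a \<in> C \<Longrightarrow> b \<in> C \<Longrightarrow> le (m a (i a b)) b"
proof -
  assume C: "a \<in> C" "b \<in> C"
  have "le (m (i a b) a) b" using C resid[of a b "i a b"] le_refl i_C by blast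
  thus ?thesis using C m_comm i_C by simp
qed

lemma m_mono: "a \<in> C \<Longrightarrow> b \<in> C \<Longrightarrow> a' \<in> C \<Longrightarrow> b' \<in> C \<Longrightarrow> le a a' \<Longrightarrow> le b b' \<Longrightarrow> le (m a b) (m a' b')"
proof -
  assume C: "a \<in> C" "b \<in> C" "a' \<in> C" "b' \<in> C" and l: "le a a'" "le b b'"
  have "le (m a b) a'" using le_trans[OF m_C[OF C(1,2)] C(1) C(3) m_le1[OF C(1,2)] l(1)] .
  moreover have "le (m a b) b'" using le_trans[OF m_C[OF C(1,2)] C(2) C(4) m_le2[OF C(1,2)] l(2)] .
  ultimately show ?thesis using m_glb C m_C by blast
qed

lemma j_mono: "a \<in> C \<Longrightarrow> b \<in> C \<Longrightarrow> a' \<in> C \<Longrightarrow> b' \<in> C \<Longrightarrow> le a a' \<Longrightarrow> le b b' \<Longrightarrow> le (j a b) (j a' b')"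
proof -
  assume C: "a \<in> C" "b \<in> C" "a' \<in> C" "b' \<in> C" and l: "le a a'" "le b b'"
  have "le a (j a' b')" using le_trans[OF C(1) C(3) j_C[OF C(3,4)] l(1) le_j1[OF C(3,4)]] .
  moreover have "le b (j a' b')" using le_trans[OF C(2) C(4) j_C[OF C(3,4)] l(2) le_j2[OF C(3,4)]] .
  ultimately show ?thesis using j_lub C j_C by blast
qed

lemma i_mono: "a \<in> C \<Longrightarrow> b \<in> C \<Longrightarrow> a' \<in> C \<Longrightarrow> b' \<in> C \<Longrightarrow> le a' a \<Longrightarrow> le b b' \<Longrightarrow> le (i a b) (i a' b')"
proof -
  assume C: "a \<in> C" "b \<in> C" "a' \<in> C" "b' \<in> C" and l: "le a' a" "le b b'"
  have 1: "le (m (i a b) a') (m (i a b) a)" using C l by (simp add: i_C le_refl m_mono)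
  have 2: "le (m (i a b) a) b" using C mp[of a b] m_comm[of a "i a b"] i_C by simp
  have "le (m (i a b) a') b" using le_trans[OF m_C[OF i_C[OF C(1,2)] C(3)] m_C[OF i_C[OF C(1,2)] C(1)] C(2) 1 2] .
  hence "le (m (i a b) a') b'" using le_trans[OF m_C[OF i_C[OF C(1,2)] C(3)] C(2) C(4) _ l(2)] by blast
  thus ?thesis using C by (simp add: i_C resid)
qed

lemma neg_anti: "a \<in> C \<Longrightarrow> a' \<in> C \<Longrightarrow> le a' a \<Longrightarrow> le (neg H a) (neg H a')"
  by (simp add: bot_C i_mono le_refl neg_eq)

lemma le_bot_eq: "a \<in> C \<Longrightarrow> le a (bot H) \<Longrightarrow> a = bot H"
  by (simp add: bot_C le_antisym le_bot)

lemma m_neg: "a \<in> C \<Longrightarrow> le (m a (neg H a)) (bot H)"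
  by (simp add: bot_C mp neg_eq)

lemma distrib: "k \<in> C \<Longrightarrow> a \<in> C \<Longrightarrow> b \<in> C \<Longrightarrow> le (m k (j a b)) (j (m k a) (m k b))"
proof -
  assume C: "k \<in> C" "a \<in> C" "b \<in> C"
  let ?R = "j (m k a) (m k b)"
  have R: "?R \<in> C" using C by (simp add: j_C m_C)
  have "le (m a k) ?R" using C le_j1[of "m k a" "m k b"] m_comm[of a k] m_C by simp
  hence 1: "le a (i k ?R)" using C R resid by blast
  have "le (m b k) ?R" using C le_j2[of "m k a" "m k b"] m_comm[of b k] m_C by simp
  hence 2: "le b (i k ?R)" using C R resid by blast
  have "le (j a b) (i k ?R)" using 1 2 C R by (simp add: i_C j_lub)
  hence "le (m (j a b) k) ?R" using C R by (simp add: j_C resid)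
  thus ?thesis using C by (simp add: j_C m_comm)
qed

lemma top_i: "a \<in> C \<Longrightarrow> i a a = top H"
proof -
  assume C: "a \<in> C"
  have "le (m (top H) a) a" using C m_le2 top_C by blast
  hence "le (top H) (i a a)" using C resid top_C by blast
  thus ?thesis using C le_antisym le_top i_C top_C by blast
qed

end

locale SR = HA H for H :: "'a alg" +
  fixes L :: "sym set" and S :: "'a set"
  assumes sub: "subreduct L H S" and andL: "SAnd \<in> L"
begin

lemma S_C: "S \<subseteq> C" and S_ne: "S \<noteq> {}"
  using sub unfolding subreduct_def by blast+

lemma sC: "a \<in> S \<Longrightarrow> a \<in> C" using S_C by blast

lemma m_S: "a \<in> S \<Longrightarrow> b \<in> S \<Longrightarrow> m a b \<in> S"
  using sub andL unfolding subreduct_def by blast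

lemma j_S: "SOr \<in> L \<Longrightarrow> a \<in> S \<Longrightarrow> b \<in> S \<Longrightarrow> j a b \<in> S"
  and i_S: "SImp \<in> L \<Longrightarrow> a \<in> S \<Longrightarrow> b \<in> S \<Longrightarrow> i a b \<in> S"
  and n_S: "SNeg \<in> L \<Longrightarrow> a \<in> S \<Longrightarrow> neg H a \<in> S"
  and b_S: "SBot \<in> L \<Longrightarrow> bot H \<in> S"
  and t_S: "STop \<in> L \<Longrightarrow> top H \<in> S"
  using sub unfolding subreduct_def by blast+

lemma bot_S_neg: "SNeg \<in> L \<Longrightarrow> bot H \<in> S"
proof -
  assume n: "SNeg \<in> L"
  obtain a where a: "a \<in> S" using S_ne by blast
  have "m a (neg H a) \<in> S" using a n m_S n_S by blast
  moreover have aC: "a \<in> C" using sC a by blast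
  moreover have "m a (neg H a) = bot H"
    using le_bot_eq[OF m_C[OF aC n_C[OF aC]] m_neg[OF aC]] .
  ultimately show ?thesis by simp
qed

definition filt :: "'a set \<Rightarrow> bool" where "filt G \<equiv> is_filter H S G"

lemma filtD: assumes "filt G"
  shows "G \<subseteq> S" "G \<noteq> {}" "\<And>a b. a \<in> G \<Longrightarrow> b \<in> S \<Longrightarrow> le a b \<Longrightarrow> b \<in> G"
    "\<And>a b. a \<in> G \<Longrightarrow> b \<in> G \<Longrightarrow> m a b \<in> G"
  using assms unfolding filt_def is_filter_def by blast+

lemma filtI: "G \<subseteq> S \<Longrightarrow> G \<noteq> {} \<Longrightarrow> (\<And>a b. a \<in> G \<Longrightarrow> b \<in> S \<Longrightarrow> le a b \<Longrightarrow> b \<in> G)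
   \<Longrightarrow> (\<And>a b. a \<in> G \<Longrightarrow> b \<in> G \<Longrightarrow> m a b \<in> G) \<Longrightarrow> filt G"
  unfolding filt_def is_filter_def by blast

lemma filt_m_D1: "filt G \<Longrightarrow> a \<in> S \<Longrightarrow> b \<in> S \<Longrightarrow> m a b \<in> G \<Longrightarrow> a \<in> G"
  using filtD(3)[of G "m a b" a] m_le1[OF sC sC] by blast
lemma filt_m_D2: "filt G \<Longrightarrow> a \<in> S \<Longrightarrow> b \<in> S \<Longrightarrow> m a b \<in> G \<Longrightarrow> b \<in> G"
  using filtD(3)[of G "m a b" b] m_le2[OF sC sC] by blast

definition X :: "'a set set" where "X = dual_poset H S"

lemma X_def2: "K \<in> X \<longleftrightarrow> filt K \<and> K \<noteq> S \<and>
   (\<forall>G1 G2. filt G1 \<longrightarrow> filt G2 \<longrightarrow> G1 \<noteq> K \<longrightarrow> G2 \<noteq> K \<longrightarrow> K \<noteq> G1 \<inter> G2)"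
  unfolding X_def dual_poset_def meet_irreducible_filter_def filt_def mem_Collect_eq
  by (intro iffI; elim conjE; intro conjI; (assumption | metis))

lemma XD: assumes "K \<in> X" shows "filt K" "K \<noteq> S" "K \<subseteq> S"
proof -
  show f: "filt K" using assms unfolding X_def2 by blast
  show "K \<noteq> S" using assms unfolding X_def2 by blast
  show "K \<subseteq> S" using filtD(1)[OF f] .
qed

lemma X_irr: assumes "K \<in> X" "filt G1" "filt G2" "G1 \<noteq> K" "G2 \<noteq> K" shows "K \<noteq> G1 \<inter> G2"
proof -
  have "\<forall>G1 G2. filt G1 \<longrightarrow> filt G2 \<longrightarrow> G1 \<noteq> K \<longrightarrow> G2 \<noteq> K \<longrightarrow> K \<noteq> G1 \<inter> G2"
    using assms(1) unfolding X_def2 by (elim conjE)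
  thus ?thesis using assms(2-5) by blast
qed

lemma X_notS: "K \<in> X \<Longrightarrow> \<exists>a\<in>S. a \<notin> K"
  using XD(2,3)[of K] by blast

lemma bot_notin: "K \<in> X \<Longrightarrow> bot H \<notin> K"
proof
  assume K: "K \<in> X" and b: "bot H \<in> K"
  have "S \<subseteq> K"
  proof
    fix s assume "s \<in> S"
    thus "s \<in> K" using filtD(3)[OF XD(1)[OF K] b] le_bot[OF sC] by blast
  qed
  thus False using XD[OF K] by blast
qed

lemma filt_Int: assumes f: "filt G1" "filt G2" and ne: "G1 \<inter> G2 \<noteq> {}" shows "filt (G1 \<inter> G2)"
proof (rule filtI)
  show "G1 \<inter> G2 \<subseteq> S" using filtD(1)[OF f(1)] by blast
  show "G1 \<inter> G2 \<noteq> {}" by fact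
  show "b \<in> G1 \<inter> G2" if "a \<in> G1 \<inter> G2" "b \<in> S" "le a b" for a b
    using filtD(3)[OF f(1), of a b] filtD(3)[OF f(2), of a b] that by blast
  show "m a b \<in> G1 \<inter> G2" if "a \<in> G1 \<inter> G2" "b \<in> G1 \<inter> G2" for a b
    using filtD(4)[OF f(1), of a b] filtD(4)[OF f(2), of a b] that by blast
qed

lemma irr_pair:
  assumes K: "K \<in> X" and f: "filt G1" "filt G2" and s: "K \<subseteq> G1" "K \<subseteq> G2" and n: "G1 \<noteq> K" "G2 \<noteq> K"
  shows "\<exists>c\<in>G1 \<inter> G2. c \<notin> K"
proof (rule ccontr)
  assume "\<not> ?thesis"
  hence "K = G1 \<inter> G2" using s by blast
  thus False using X_irr[OF K f n] by blast
qed

definition gen :: "'a set \<Rightarrow> 'a set \<Rightarrow> 'a set" where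
  "gen K D = {s\<in>S. \<exists>k\<in>K. \<exists>d\<in>D. le (m k d) s}"

lemma gen_filt:
  assumes K: "filt K" and D: "D \<subseteq> S" "D \<noteq> {}" and dd: "\<And>d1 d2. d1 \<in> D \<Longrightarrow> d2 \<in> D \<Longrightarrow> \<exists>d\<in>D. le d d1 \<and> le d d2"
  shows "filt (gen K D)" "K \<subseteq> gen K D" "D \<subseteq> gen K D"
proof -
  have KS: "K \<subseteq> S" using filtD[OF K] by blast
  show "filt (gen K D)"
  proof (rule filtI)
    show "gen K D \<subseteq> S" unfolding gen_def by blast
    obtain k where k: "k \<in> K" using filtD(2)[OF K] by blast
    obtain d where d: "d \<in> D" using D by blast
    have kdS: "m k d \<in> S" using k d KS D m_S by blast
    have "le (m k d) (m k d)" using le_refl[OF sC[OF kdS]] .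
    hence "m k d \<in> gen K D" unfolding gen_def using k d kdS by blast
    thus "gen K D \<noteq> {}" by blast
  next
    fix a b assume a: "a \<in> gen K D" and b: "b \<in> S" and ab: "le a b"
    from a obtain k d where kd: "k \<in> K" "d \<in> D" "le (m k d) a" "a \<in> S" unfolding gen_def by blast
    have "m k d \<in> S" using kd KS D m_S by blast
    hence "le (m k d) b" using le_trans[OF sC sC sC[OF b] kd(3) ab] kd by blast
    thus "b \<in> gen K D" unfolding gen_def using kd b by blast
  next
    fix a b assume a: "a \<in> gen K D" and b: "b \<in> gen K D"
    from a obtain k1 d1 where 1: "k1 \<in> K" "d1 \<in> D" "le (m k1 d1) a" "a \<in> S" unfolding gen_def by blast
    from b obtain k2 d2 where 2: "k2 \<in> K" "d2 \<in> D" "le (m k2 d2) b" "b \<in> S" unfolding gen_def by blast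
    obtain d where d: "d \<in> D" "le d d1" "le d d2" using dd 1 2 by blast
    have S: "k1 \<in> S" "k2 \<in> S" "d \<in> S" "d1 \<in> S" "d2 \<in> S" using 1 2 d KS D by blast+
    have k: "m k1 k2 \<in> K" using filtD(4)[OF K 1(1) 2(1)] .
    have C: "k1 \<in> C" "k2 \<in> C" "d \<in> C" "d1 \<in> C" "d2 \<in> C" "a \<in> C" "b \<in> C"
      using S 1 2 sC by auto
    have kk: "m k1 k2 \<in> C" using m_C C by blast
    have kd: "m (m k1 k2) d \<in> C" using m_C C kk by blast
    have "le (m k1 k2) k1" "le (m k1 k2) k2" using m_le1 m_le2 C by blast+
    hence x: "le (m (m k1 k2) d) (m k1 d1)" "le (m (m k1 k2) d) (m k2 d2)"
      using m_mono[OF kk C(3) C(1) C(4)] m_mono[OF kk C(3) C(2) C(5)] d by blast+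
    have "le (m (m k1 k2) d) a" using le_trans[OF kd m_C[OF C(1) C(4)] C(6) x(1) 1(3)] .
    moreover have "le (m (m k1 k2) d) b" using le_trans[OF kd m_C[OF C(2) C(5)] C(7) x(2) 2(3)] .
    ultimately have "le (m (m k1 k2) d) (m a b)" using m_glb[OF C(6) C(7) kd] by blast
    thus "m a b \<in> gen K D" unfolding gen_def using k d 1 2 m_S by blast
  qed
  show "K \<subseteq> gen K D"
  proof
    fix k assume k: "k \<in> K"
    obtain d where d: "d \<in> D" using D by blast
    have "k \<in> S" "d \<in> S" using k d KS D by blast+
    hence "le (m k d) k" using m_le1[OF sC sC] by blast
    thus "k \<in> gen K D" unfolding gen_def using k d KS by blast
  qed
  show "D \<subseteq> gen K D"
  proof
    fix d assume d: "d \<in> D"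
    obtain k where k: "k \<in> K" using filtD(2)[OF K] by blast
    have "k \<in> S" "d \<in> S" using k d KS D by blast+
    hence "le (m k d) d" using m_le2[OF sC sC] by blast
    thus "d \<in> gen K D" unfolding gen_def using k d D by blast
  qed
qed

lemma gen1: assumes "filt K" "a \<in> S"
  shows "filt (gen K {a})" "K \<subseteq> gen K {a}" "a \<in> gen K {a}"
  using gen_filt[of K "{a}"] assms le_refl sC by auto

lemma gen_memD: "s \<in> gen K D \<Longrightarrow> \<exists>k\<in>K. \<exists>d\<in>D. le (m k d) s"
  unfolding gen_def by blast

lemma zorn_ext:
  assumes G0: "filt G0" and E: "E \<subseteq> S" "E \<noteq> {}"
    and dir: "\<And>e1 e2. e1 \<in> E \<Longrightarrow> e2 \<in> E \<Longrightarrow> \<exists>e\<in>E. le e1 e \<and> le e2 e"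
    and disj: "G0 \<inter> E = {}"
  shows "\<exists>K. K \<in> X \<and> G0 \<subseteq> K \<and> K \<inter> E = {} \<and> (\<forall>G. filt G \<and> K \<subseteq> G \<and> G \<inter> E = {} \<longrightarrow> G = K)"
proof -
  let ?A = "{G. filt G \<and> G0 \<subseteq> G \<and> G \<inter> E = {}}"
  have "\<exists>M\<in>?A. \<forall>Y\<in>?A. M \<subseteq> Y \<longrightarrow> Y = M"
  proof (rule subset_Zorn_nonempty)
    show "?A \<noteq> {}" using G0 disj by blast
  next
    fix Ch assume ne: "Ch \<noteq> {}" and ch: "subset.chain ?A Ch"
    have chA: "Ch \<subseteq> ?A" and tot: "\<forall>x\<in>Ch. \<forall>y\<in>Ch. x \<subseteq> y \<or> y \<subseteq> x"
      using ch unfolding subset_chain_def by blast+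
    have "filt (\<Union>Ch)"
    proof (rule filtI)
      show "\<Union>Ch \<subseteq> S"
      proof
        fix x assume "x \<in> \<Union>Ch"
        then obtain G where "G \<in> Ch" "x \<in> G" by blast
        thus "x \<in> S" using filtD(1)[of G] chA by blast
      qed
      obtain G where G: "G \<in> Ch" using ne by blast
      hence "G \<noteq> {}" using filtD(2)[of G] chA by blast
      thus "\<Union>Ch \<noteq> {}" using G by blast
      show "b \<in> \<Union>Ch" if h: "a \<in> \<Union>Ch" "b \<in> S" "le a b" for a b
      proof -
        obtain G where G: "G \<in> Ch" "a \<in> G" using h(1) by blast
        have "filt G" using G chA by blast
        thus ?thesis using filtD(3)[of G a b] G h by blast
      qed
      show "m a b \<in> \<Union>Ch" if h: "a \<in> \<Union>Ch" "b \<in> \<Union>Ch" for a b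
      proof -
        obtain G1 G2 where g: "G1 \<in> Ch" "G2 \<in> Ch" "a \<in> G1" "b \<in> G2" using h by blast
        have "(a \<in> G1 \<and> b \<in> G1) \<or> (a \<in> G2 \<and> b \<in> G2)" using tot g by blast
        moreover have "filt G1" "filt G2" using g chA by blast+
        ultimately show ?thesis using g filtD(4) by blast
      qed
    qed
    moreover have "G0 \<subseteq> \<Union>Ch" using ne chA by blast
    moreover have "\<Union>Ch \<inter> E = {}" using chA by blast
    ultimately show "\<Union>Ch \<in> ?A" by blast
  qed
  then obtain M where MA: "M \<in> ?A" and max0: "\<forall>Y\<in>?A. M \<subseteq> Y \<longrightarrow> Y = M" by (elim bexE)
  have M: "filt M" "G0 \<subseteq> M" "M \<inter> E = {}" using MA by simp_all
  have max: "Y = M" if "filt Y" "G0 \<subseteq> Y" "Y \<inter> E = {}" "M \<subseteq> Y" for Y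
    using max0 that by simp
  have "M \<in> X" unfolding X_def2
  proof (intro conjI allI impI)
    show "filt M" by fact
    show "M \<noteq> S" using M E by blast
    fix G1 G2 assume f: "filt G1" "filt G2" "G1 \<noteq> M" "G2 \<noteq> M"
    show "M \<noteq> G1 \<inter> G2"
    proof
      assume eq: "M = G1 \<inter> G2"
      have "G0 \<subseteq> G1" using eq M(2) by blast
      hence "G1 \<inter> E \<noteq> {}" using max[of G1] f(1,3) eq by blast
      then obtain e1 where e1: "e1 \<in> G1" "e1 \<in> E" by blast
      have "G0 \<subseteq> G2" using eq M(2) by blast
      hence "G2 \<inter> E \<noteq> {}" using max[of G2] f(2,4) eq by blast
      then obtain e2 where e2: "e2 \<in> G2" "e2 \<in> E" by blast
      obtain e where e: "e \<in> E" "le e1 e" "le e2 e" using dir e1 e2 by blast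
      have "e \<in> S" using e E by blast
      hence "e \<in> G1" "e \<in> G2" using filtD(3)[OF f(1) e1(1)] filtD(3)[OF f(2) e2(1)] e by blast+
      thus False using eq e M by blast
    qed
  qed
  moreover have "\<forall>G. filt G \<and> M \<subseteq> G \<and> G \<inter> E = {} \<longrightarrow> G = M"
  proof (intro allI impI)
    fix G assume "filt G \<and> M \<subseteq> G \<and> G \<inter> E = {}"
    thus "G = M" using max[of G] M(2) by blast
  qed
  ultimately show ?thesis using M by blast
qed

lemma sep:
  assumes a: "a \<in> S" and b: "b \<in> S" and nle: "\<not> le a b"
  shows "\<exists>K\<in>X. a \<in> K \<and> b \<notin> K"
proof -
  let ?G = "{s\<in>S. le a s}"
  have f: "filt ?G"
  proof (rule filtI)
    show "?G \<noteq> {}" using a le_refl sC by blast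
    show "m x y \<in> ?G" if "x \<in> ?G" "y \<in> ?G" for x y
    proof -
      have "le a (m x y)" using m_glb[OF sC sC sC[OF a]] that by blast
      thus ?thesis using m_S that by blast
    qed
    show "y \<in> ?G" if "x \<in> ?G" "y \<in> S" "le x y" for x y
    proof -
      have "le a y" using le_trans[OF sC[OF a] sC sC] that by blast
      thus ?thesis using that by blast
    qed
  qed blast
  have bS: "{b} \<subseteq> S" using b by blast
  have dis: "?G \<inter> {b} = {}" using nle by blast
  have dir: "\<And>e1 e2. e1 \<in> {b} \<Longrightarrow> e2 \<in> {b} \<Longrightarrow> \<exists>e\<in>{b}. le e1 e \<and> le e2 e"
    using le_refl[OF sC[OF b]] by blast
  obtain K where K: "K \<in> X" "?G \<subseteq> K" "K \<inter> {b} = {}"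
    using zorn_ext[OF f bS _ dir dis] by blast
  have "a \<in> ?G" using a le_refl[OF sC[OF a]] by blast
  thus ?thesis using K by blast
qed

end

context SR
begin

lemma prime:
  assumes orL: "SOr \<in> L" and K: "K \<in> X" and ab: "a \<in> S" "b \<in> S" and jK: "j a b \<in> K"
  shows "a \<in> K \<or> b \<in> K"
proof (rule ccontr)
  assume "\<not> (a \<in> K \<or> b \<in> K)"
  hence na: "a \<notin> K" and nb: "b \<notin> K" by blast+
  have fK: "filt K" and KS: "K \<subseteq> S" using XD[OF K] by blast+
  note ga = gen1[OF fK ab(1)] and gb = gen1[OF fK ab(2)]
  have "gen K {a} \<noteq> K" using ga(3) na by blast
  moreover have "gen K {b} \<noteq> K" using gb(3) nb by blast
  ultimately obtain c where c: "c \<in> gen K {a}" "c \<in> gen K {b}" "c \<notin> K"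
    using irr_pair[OF K ga(1) gb(1) ga(2) gb(2)] by blast
  have cS: "c \<in> S" using c(1) unfolding gen_def by blast
  obtain k1 where k1: "k1 \<in> K" "le (m k1 a) c" using gen_memD[OF c(1)] by blast
  obtain k2 where k2: "k2 \<in> K" "le (m k2 b) c" using gen_memD[OF c(2)] by blast
  have k1C: "k1 \<in> C" and k2C: "k2 \<in> C" using k1 k2 KS sC by blast+
  have aC: "a \<in> C" and bC: "b \<in> C" and cC: "c \<in> C" using ab cS sC by blast+
  define k where "k = m k1 k2"
  have kK: "k \<in> K" unfolding k_def using filtD(4)[OF fK k1(1) k2(1)] .
  have kC: "k \<in> C" unfolding k_def using m_C k1C k2C by blast
  have "le (m k a) (m k1 a)" unfolding k_def using m_mono[OF m_C[OF k1C k2C] aC k1C aC m_le1[OF k1C k2C] le_refl[OF aC]] .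
  hence 1: "le (m k a) c" using le_trans[OF m_C[OF kC aC] m_C[OF k1C aC] cC _ k1(2)] by blast
  have "le (m k b) (m k2 b)" unfolding k_def using m_mono[OF m_C[OF k1C k2C] bC k2C bC m_le2[OF k1C k2C] le_refl[OF bC]] .
  hence 2: "le (m k b) c" using le_trans[OF m_C[OF kC bC] m_C[OF k2C bC] cC _ k2(2)] by blast
  have "le (j (m k a) (m k b)) c" using j_lub[OF m_C[OF kC aC] m_C[OF kC bC] cC 1 2] .
  hence "le (m k (j a b)) c" using le_trans[OF m_C[OF kC j_C[OF aC bC]] j_C[OF m_C[OF kC aC] m_C[OF kC bC]] cC distrib[OF kC aC bC]] by blast
  moreover have "m k (j a b) \<in> K" using filtD(4)[OF fK kK jK] .
  ultimately have "c \<in> K" using filtD(3)[OF fK _ cS] by blast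
  thus False using c(3) by blast
qed

definition ub :: "'a set \<Rightarrow> bool" where
  "ub K \<longleftrightarrow> (\<forall>a\<in>S. \<forall>b\<in>S. a \<notin> K \<longrightarrow> b \<notin> K \<longrightarrow> (\<exists>e\<in>S. e \<notin> K \<and> le a e \<and> le b e))"

lemma ub_or: assumes "SOr \<in> L" "K \<in> X" shows "ub K"
  unfolding ub_def
proof (intro ballI impI)
  fix a b assume ab: "a \<in> S" "b \<in> S" "a \<notin> K" "b \<notin> K"
  have "j a b \<in> S" using j_S assms(1) ab by blast
  moreover have "j a b \<notin> K" using prime[OF assms] ab by blast
  moreover have "le a (j a b)" "le b (j a b)" using le_j1 le_j2 ab sC by blast+
  ultimately show "\<exists>e\<in>S. e \<notin> K \<and> le a e \<and> le b e" by blast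
qed

lemma ub_imp: assumes impL: "SImp \<in> L" and K: "K \<in> X" shows "ub K"
  unfolding ub_def
proof (intro ballI impI)
  fix a b assume ab: "a \<in> S" "b \<in> S" and na: "a \<notin> K" and nb: "b \<notin> K"
  have fK: "filt K" and KS: "K \<subseteq> S" using XD[OF K] by blast+
  note ga = gen1[OF fK ab(1)] and gb = gen1[OF fK ab(2)]
  have "gen K {a} \<noteq> K" using ga(3) na by blast
  moreover have "gen K {b} \<noteq> K" using gb(3) nb by blast
  ultimately obtain c where c: "c \<in> gen K {a}" "c \<in> gen K {b}" "c \<notin> K"
    using irr_pair[OF K ga(1) gb(1) ga(2) gb(2)] by blast
  have cS: "c \<in> S" using c(1) unfolding gen_def by blast
  obtain k1 where k1: "k1 \<in> K" "le (m k1 a) c" using gen_memD[OF c(1)] by blast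
  obtain k2 where k2: "k2 \<in> K" "le (m k2 b) c" using gen_memD[OF c(2)] by blast
  have k1C: "k1 \<in> C" and k2C: "k2 \<in> C" using k1 k2 KS sC by blast+
  have aC: "a \<in> C" and bC: "b \<in> C" and cC: "c \<in> C" using ab cS sC by blast+
  have acS: "i a c \<in> S" and bcS: "i b c \<in> S" using i_S[OF impL] ab cS by blast+
  have acC: "i a c \<in> C" and bcC: "i b c \<in> C" using i_C aC bC cC by blast+
  have "le k1 (i a c)" using resid[OF aC cC k1C] k1(2) by blast
  hence ac: "i a c \<in> K" using filtD(3)[OF fK k1(1) acS] by blast
  have "le k2 (i b c)" using resid[OF bC cC k2C] k2(2) by blast
  hence bc: "i b c \<in> K" using filtD(3)[OF fK k2(1) bcS] by blast
  define P where "P = m (i a c) (i b c)"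
  have PK: "P \<in> K" unfolding P_def using filtD(4)[OF fK ac bc] .
  have PS: "P \<in> S" and PC: "P \<in> C" using PK KS sC by blast+
  define e where "e = i P c"
  have eS: "e \<in> S" unfolding e_def using i_S[OF impL PS cS] .
  have eC: "e \<in> C" using eS sC by blast
  have "e \<notin> K"
  proof
    assume "e \<in> K"
    hence "m P e \<in> K" using filtD(4)[OF fK PK] by blast
    moreover have "le (m P e) c" unfolding e_def using mp[OF PC cC] .
    ultimately have "c \<in> K" using filtD(3)[OF fK _ cS] by blast
    thus False using c(3) by blast
  qed
  moreover have "le a e"
  proof -
    have "le (m a P) (m a (i a c))"
      unfolding P_def using m_mono[OF aC m_C[OF acC bcC] aC acC le_refl[OF aC] m_le1[OF acC bcC]] .
    hence "le (m a P) c" using le_trans[OF m_C[OF aC PC] m_C[OF aC acC] cC _ mp[OF aC cC]] by blast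
    thus ?thesis unfolding e_def using resid[OF PC cC aC] by blast
  qed
  moreover have "le b e"
  proof -
    have "le (m b P) (m b (i b c))"
      unfolding P_def using m_mono[OF bC m_C[OF acC bcC] bC bcC le_refl[OF bC] m_le2[OF acC bcC]] .
    hence "le (m b P) c" using le_trans[OF m_C[OF bC PC] m_C[OF bC bcC] cC _ mp[OF bC cC]] by blast
    thus ?thesis unfolding e_def using resid[OF PC cC bC] by blast
  qed
  ultimately show "\<exists>e\<in>S. e \<notin> K \<and> le a e \<and> le b e" using eS by blast
qed

lemma neg_in_max:
  assumes negL: "SNeg \<in> L" and K: "K \<in> X"
    and mx: "\<forall>G. filt G \<and> K \<subseteq> G \<and> G \<inter> {bot H} = {} \<longrightarrow> G = K"
    and a: "a \<in> S" "a \<notin> K"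
  shows "neg H a \<in> K"
proof -
  have fK: "filt K" and KS: "K \<subseteq> S" using XD[OF K] by blast+
  note ga = gen1[OF fK a(1)]
  have "gen K {a} \<noteq> K" using ga(3) a by blast
  hence "bot H \<in> gen K {a}" using mx ga(1,2) by blast
  then obtain k where k: "k \<in> K" "le (m k a) (bot H)" using gen_memD by blast
  have "le k (i a (bot H))" using resid[OF sC[OF a(1)] bot_C] k KS sC by blast
  hence "le k (neg H a)" using neg_eq sC a by simp
  thus ?thesis using filtD(3)[OF fK k(1) n_S[OF negL a(1)]] by blast
qed

lemma ub_neg:
  assumes negL: "SNeg \<in> L" and K: "K \<in> X"
    and mx: "\<forall>G. filt G \<and> K \<subseteq> G \<and> G \<inter> {bot H} = {} \<longrightarrow> G = K"
  shows "ub K"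
  unfolding ub_def
proof (intro ballI impI)
  fix a b assume ab: "a \<in> S" "b \<in> S" and na: "a \<notin> K" and nb: "b \<notin> K"
  have fK: "filt K" and KS: "K \<subseteq> S" using XD[OF K] by blast+
  have aK: "neg H a \<in> K" using neg_in_max[OF negL K mx ab(1) na] .
  have bK: "neg H b \<in> K" using neg_in_max[OF negL K mx ab(2) nb] .
  have aC: "a \<in> C" and bC: "b \<in> C" using ab sC by blast+
  have naC: "neg H a \<in> C" and nbC: "neg H b \<in> C" using n_C aC bC by blast+
  define P where "P = m (neg H a) (neg H b)"
  have PK: "P \<in> K" unfolding P_def using filtD(4)[OF fK aK bK] .
  have PS: "P \<in> S" and PC: "P \<in> C" using PK KS sC by blast+
  define e where "e = neg H P"
  have eS: "e \<in> S" unfolding e_def using n_S[OF negL PS] .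
  have botS: "bot H \<in> S" using bot_S_neg[OF negL] .
  have "e \<notin> K"
  proof
    assume "e \<in> K"
    hence "m P e \<in> K" using filtD(4)[OF fK PK] by blast
    moreover have "le (m P e) (bot H)" unfolding e_def using m_neg[OF PC] .
    ultimately have "bot H \<in> K" using filtD(3)[OF fK _ botS] by blast
    thus False using bot_notin[OF K] by blast
  qed
  moreover have "le a e"
  proof -
    have "le (m a P) (m a (neg H a))"
      unfolding P_def using m_mono[OF aC m_C[OF naC nbC] aC naC le_refl[OF aC] m_le1[OF naC nbC]] .
    hence "le (m a P) (bot H)" using le_trans[OF m_C[OF aC PC] m_C[OF aC naC] bot_C _ m_neg[OF aC]] by blast
    hence "le a (i P (bot H))" using resid[OF PC bot_C aC] by blast
    thus ?thesis unfolding e_def using neg_eq[OF PC] by simp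
  qed
  moreover have "le b e"
  proof -
    have "le (m b P) (m b (neg H b))"
      unfolding P_def using m_mono[OF bC m_C[OF naC nbC] bC nbC le_refl[OF bC] m_le2[OF naC nbC]] .
    hence "le (m b P) (bot H)" using le_trans[OF m_C[OF bC PC] m_C[OF bC nbC] bot_C _ m_neg[OF bC]] by blast
    hence "le b (i P (bot H))" using resid[OF PC bot_C bC] by blast
    thus ?thesis unfolding e_def using neg_eq[OF PC] by simp
  qed
  ultimately show "\<exists>e\<in>S. e \<notin> K \<and> le a e \<and> le b e" using eS by blast
qed

lemma good_ub:
  assumes fin: "finite Cs" and K: "K \<in> X" and u: "ub K"
  shows "(\<forall>G\<in>Cs. filt G \<and> \<not> G \<subseteq> K) \<Longrightarrow> \<exists>c\<in>S. c \<notin> K \<and> (\<forall>G\<in>Cs. c \<in> G)"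
  using fin
proof (induction Cs rule: finite_induct)
  case empty
  then show ?case using X_notS[OF K] by blast
next
  case (insert G Cs)
  then obtain c0 where c0: "c0 \<in> S" "c0 \<notin> K" "\<forall>G\<in>Cs. c0 \<in> G" by blast
  have fG: "filt G" and nG: "\<not> G \<subseteq> K" using insert.prems by blast+
  obtain g where g: "g \<in> G" "g \<notin> K" using nG by blast
  have gS: "g \<in> S" using g filtD(1)[OF fG] by blast
  obtain e where e: "e \<in> S" "e \<notin> K" "le c0 e" "le g e" using u c0 gS g unfolding ub_def by blast
  have "e \<in> G" using filtD(3)[OF fG g(1) e(1) e(4)] .
  moreover have "\<forall>G'\<in>Cs. e \<in> G'"
  proof
    fix G' assume G': "G' \<in> Cs"
    have "filt G'" using G' insert.prems by blast
    thus "e \<in> G'" using filtD(3)[of G' c0 e] c0 G' e by blast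
  qed
  ultimately show ?case using e by blast
qed

lemma good_F_aux:
  assumes fin: "finite Cs" and ne: "Cs \<noteq> {}" and K: "K \<in> X"
    and h: "\<forall>G\<in>Cs. filt G \<and> K \<subseteq> G \<and> G \<noteq> K"
  shows "filt (\<Inter>Cs) \<and> K \<subseteq> \<Inter>Cs \<and> \<Inter>Cs \<noteq> K"
  using fin ne h
proof (induction Cs rule: finite_ne_induct)
  case (singleton G)
  then show ?case by simp
next
  case (insert G Cs)
  have IH: "filt (\<Inter>Cs)" "K \<subseteq> \<Inter>Cs" "\<Inter>Cs \<noteq> K" using insert.IH insert.prems by blast+
  have G: "filt G" "K \<subseteq> G" "G \<noteq> K" using insert.prems by blast+
  have Kne: "K \<noteq> {}" using filtD(2)[OF XD(1)[OF K]] .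
  have "filt (G \<inter> \<Inter>Cs)" using filt_Int[OF G(1) IH(1)] IH(2) G(2) Kne by blast
  moreover have "K \<subseteq> G \<inter> \<Inter>Cs" using IH(2) G(2) by blast
  moreover have "G \<inter> \<Inter>Cs \<noteq> K" using X_irr[OF K G(1) IH(1) G(3) IH(3)] by blast
  ultimately show ?case by simp
qed

lemma good_F:
  assumes fin: "finite Cs" and K: "K \<in> X"
    and h: "\<forall>G\<in>Cs. filt G \<and> K \<subseteq> G \<and> G \<noteq> K"
  shows "\<exists>c\<in>S. c \<notin> K \<and> (\<forall>G\<in>Cs. c \<in> G)"
proof (cases "Cs = {}")
  case True
  then show ?thesis using X_notS[OF K] by blast
next
  case False
  have a: "filt (\<Inter>Cs)" "K \<subseteq> \<Inter>Cs" "\<Inter>Cs \<noteq> K" using good_F_aux[OF fin False K h] by blast+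
  then obtain c where c: "c \<in> \<Inter>Cs" "c \<notin> K" by blast
  have "c \<in> S" using c filtD(1)[OF a(1)] by blast
  thus ?thesis using c by blast
qed

lemma pair_comb:
  assumes K: "K \<in> X" and ab: "a \<in> S" "b \<in> S" and na: "a \<notin> K" and nb: "b \<notin> K"
  shows "\<exists>c\<in>S. c \<notin> K \<and> (\<exists>f\<in>K. le (m a f) c \<and> le (m b f) c)"
proof -
  have fK: "filt K" and KS: "K \<subseteq> S" using XD[OF K] by blast+
  note ga = gen1[OF fK ab(1)] and gb = gen1[OF fK ab(2)]
  have "gen K {a} \<noteq> K" using ga(3) na by blast
  moreover have "gen K {b} \<noteq> K" using gb(3) nb by blast
  ultimately obtain c where c: "c \<in> gen K {a}" "c \<in> gen K {b}" "c \<notin> K"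
    using irr_pair[OF K ga(1) gb(1) ga(2) gb(2)] by blast
  have cS: "c \<in> S" using c(1) unfolding gen_def by blast
  obtain k1 where k1: "k1 \<in> K" "le (m k1 a) c" using gen_memD[OF c(1)] by blast
  obtain k2 where k2: "k2 \<in> K" "le (m k2 b) c" using gen_memD[OF c(2)] by blast
  have k1C: "k1 \<in> C" and k2C: "k2 \<in> C" using k1 k2 KS sC by blast+
  have aC: "a \<in> C" and bC: "b \<in> C" and cC: "c \<in> C" using ab cS sC by blast+
  define f where "f = m k1 k2"
  have fK': "f \<in> K" unfolding f_def using filtD(4)[OF fK k1(1) k2(1)] .
  have fC: "f \<in> C" unfolding f_def using m_C k1C k2C by blast
  have "le (m f a) (m k1 a)" unfolding f_def using m_mono[OF m_C[OF k1C k2C] aC k1C aC m_le1[OF k1C k2C] le_refl[OF aC]] .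
  hence "le (m f a) c" using le_trans[OF m_C[OF fC aC] m_C[OF k1C aC] cC _ k1(2)] by blast
  hence 1: "le (m a f) c" using m_comm[OF aC fC] by simp
  have "le (m f b) (m k2 b)" unfolding f_def using m_mono[OF m_C[OF k1C k2C] bC k2C bC m_le2[OF k1C k2C] le_refl[OF bC]] .
  hence "le (m f b) c" using le_trans[OF m_C[OF fC bC] m_C[OF k2C bC] cC _ k2(2)] by blast
  hence 2: "le (m b f) c" using m_comm[OF bC fC] by simp
  show ?thesis using cS c(3) fK' 1 2 by blast
qed

lemma list_comb:
  assumes K: "K \<in> X"
  shows "set as \<subseteq> S \<Longrightarrow> (\<forall>a\<in>set as. a \<notin> K) \<Longrightarrow> \<exists>f\<in>K. \<exists>c\<in>S. c \<notin> K \<and> (\<forall>a\<in>set as. le (m a f) c)"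
proof (induction as)
  case Nil
  obtain f where "f \<in> K" using filtD(2)[OF XD(1)[OF K]] by blast
  then show ?case using X_notS[OF K] by auto
next
  case (Cons a as)
  have fK: "filt K" and KS: "K \<subseteq> S" using XD[OF K] by blast+
  obtain f1 c1 where fc1: "f1 \<in> K" "c1 \<in> S" "c1 \<notin> K" "\<forall>a\<in>set as. le (m a f1) c1"
    using Cons by auto
  have aS: "a \<in> S" "a \<notin> K" using Cons.prems by auto
  obtain c f2 where c: "c \<in> S" "c \<notin> K" "f2 \<in> K" "le (m a f2) c" "le (m c1 f2) c"
    using pair_comb[OF K aS(1) fc1(2) aS(2) fc1(3)] by blast
  define f where "f = m f1 f2"
  have fK': "f \<in> K" unfolding f_def using filtD(4)[OF fK fc1(1) c(3)] .
  have f1C: "f1 \<in> C" and f2C: "f2 \<in> C" using fc1(1) c(3) KS sC by blast+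
  have fC: "f \<in> C" unfolding f_def using m_C f1C f2C by blast
  have aC: "a \<in> C" and cC: "c \<in> C" and c1C: "c1 \<in> C" using aS c fc1 sC by blast+
  have "le (m a f) (m a f2)" unfolding f_def using m_mono[OF aC m_C[OF f1C f2C] aC f2C le_refl[OF aC] m_le2[OF f1C f2C]] .
  hence A: "le (m a f) c" using le_trans[OF m_C[OF aC fC] m_C[OF aC f2C] cC _ c(4)] by blast
  have B: "le (m a' f) c" if a': "a' \<in> set as" for a'
  proof -
    have a'C: "a' \<in> C" using a' Cons.prems sC by auto
    have "m a' f = m (m a' f1) f2" unfolding f_def using m_assoc[OF a'C f1C f2C] by simp
    moreover have "le (m (m a' f1) f2) (m c1 f2)"
      using m_mono[OF m_C[OF a'C f1C] f2C c1C f2C _ le_refl[OF f2C]] fc1(4) a' by blast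
    ultimately have "le (m a' f) (m c1 f2)" by simp
    thus ?thesis using le_trans[OF m_C[OF a'C fC] m_C[OF c1C f2C] cC _ c(5)] by blast
  qed
  show ?case using fK' c(1,2) A B by auto
qed

end

lemma Up_simps:
  "carrier (Up Y le0) = upsets Y le0" "meet (Up Y le0) = (\<inter>)" "join (Up Y le0) = (\<union>)"
  "imp (Up Y le0) = (\<lambda>U V. Y - downclosure Y le0 (U - V))"
  "neg (Up Y le0) = (\<lambda>U. Y - downclosure Y le0 U)" "bot (Up Y le0) = {}" "top (Up Y le0) = Y"
  by (simp_all add: Up_def)

lemma Up_le: "alg_le (Up Y le0) U V \<longleftrightarrow> U \<inter> V = U"
  by (simp add: alg_le_def Up_simps)

lemma downclosure_mono: "A \<subseteq> B \<Longrightarrow> downclosure Y le0 A \<subseteq> downclosure Y le0 B"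
  unfolding downclosure_def by blast

lemma evalU_sub: "(\<forall>x. V x \<subseteq> Y) \<Longrightarrow> eval (Up Y le0) V \<phi> \<subseteq> Y"
  by (induction \<phi>) (auto simp: Up_simps)

lemma evalU_mono:
  assumes "\<forall>x. V1 x \<subseteq> V2 x"
  shows "(positive \<phi> \<longrightarrow> eval (Up Y le0) V1 \<phi> \<subseteq> eval (Up Y le0) V2 \<phi>) \<and>
         (negative \<phi> \<longrightarrow> eval (Up Y le0) V2 \<phi> \<subseteq> eval (Up Y le0) V1 \<phi>)"
proof (induction \<phi>)
  case (FVar x)
  then show ?case using assms by simp
next
  case (FAnd \<phi>1 \<phi>2)
  then show ?case by (auto simp: Up_simps)
next
  case (FOr \<phi>1 \<phi>2)
  then show ?case by (auto simp: Up_simps)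
next
  case (FImp \<phi>1 \<phi>2)
  have 1: "positive (FImp \<phi>1 \<phi>2) \<longrightarrow> eval (Up Y le0) V1 (FImp \<phi>1 \<phi>2) \<subseteq> eval (Up Y le0) V2 (FImp \<phi>1 \<phi>2)"
  proof
    assume "positive (FImp \<phi>1 \<phi>2)"
    hence "eval (Up Y le0) V2 \<phi>1 - eval (Up Y le0) V2 \<phi>2 \<subseteq> eval (Up Y le0) V1 \<phi>1 - eval (Up Y le0) V1 \<phi>2"
      using FImp.IH by auto
    thus "eval (Up Y le0) V1 (FImp \<phi>1 \<phi>2) \<subseteq> eval (Up Y le0) V2 (FImp \<phi>1 \<phi>2)"
      using downclosure_mono by (simp add: Up_simps) blast
  qed
  have 2: "negative (FImp \<phi>1 \<phi>2) \<longrightarrow> eval (Up Y le0) V2 (FImp \<phi>1 \<phi>2) \<subseteq> eval (Up Y le0) V1 (FImp \<phi>1 \<phi>2)"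
  proof
    assume "negative (FImp \<phi>1 \<phi>2)"
    hence "eval (Up Y le0) V1 \<phi>1 - eval (Up Y le0) V1 \<phi>2 \<subseteq> eval (Up Y le0) V2 \<phi>1 - eval (Up Y le0) V2 \<phi>2"
      using FImp.IH by auto
    thus "eval (Up Y le0) V2 (FImp \<phi>1 \<phi>2) \<subseteq> eval (Up Y le0) V1 (FImp \<phi>1 \<phi>2)"
      using downclosure_mono by (simp add: Up_simps) blast
  qed
  show ?case using 1 2 by blast
next
  case (FNeg \<phi>)
  then show ?case using downclosure_mono by (simp add: Up_simps) blast
next
  case FBot
  then show ?case by simp
next
  case FTop
  then show ?case by simp
qed

context HA
begin

lemma eval_C: "(\<forall>x. v x \<in> C) \<Longrightarrow> eval H v \<phi> \<in> C"
  by (induction \<phi>) (auto simp: m_C j_C i_C n_C bot_C top_C)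

lemma eval_mono:
  assumes v: "\<forall>x. v x \<in> C" and w: "\<forall>x. w x \<in> C" and vw: "\<forall>x. le (v x) (w x)"
  shows "(positive \<phi> \<longrightarrow> le (eval H v \<phi>) (eval H w \<phi>)) \<and> (negative \<phi> \<longrightarrow> le (eval H w \<phi>) (eval H v \<phi>))"
proof (induction \<phi>)
  case (FVar x)
  then show ?case using vw by simp
next
  case (FAnd a b)
  then show ?case using m_mono eval_C[OF v] eval_C[OF w] by simp
next
  case (FOr a b)
  then show ?case using j_mono eval_C[OF v] eval_C[OF w] by simp
next
  case (FImp a b)
  then show ?case using i_mono eval_C[OF v] eval_C[OF w] by simp
next
  case (FNeg a)
  then show ?case using neg_anti eval_C[OF v] eval_C[OF w] by simp
next
  case FBot
  then show ?case using le_refl bot_C by simp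
next
  case FTop
  then show ?case using le_refl top_C by simp
qed

lemma eval_mono_pos: "\<forall>x. v x \<in> C \<Longrightarrow> \<forall>x. w x \<in> C \<Longrightarrow> \<forall>x. le (v x) (w x) \<Longrightarrow> positive \<phi> \<Longrightarrow> le (eval H v \<phi>) (eval H w \<phi>)"
  using eval_mono by blast
lemma eval_mono_neg: "\<forall>x. v x \<in> C \<Longrightarrow> \<forall>x. w x \<in> C \<Longrightarrow> \<forall>x. le (v x) (w x) \<Longrightarrow> negative \<phi> \<Longrightarrow> le (eval H w \<phi>) (eval H v \<phi>)"
  using eval_mono by blast

end

context SR
begin

lemma eval_S: "syms \<phi> \<subseteq> L \<Longrightarrow> (\<forall>x. v x \<in> S) \<Longrightarrow> eval H v \<phi> \<in> S"
  by (induction \<phi>) (auto simp: m_S j_S i_S n_S b_S t_S)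

definition hat :: "'a \<Rightarrow> 'a set set" where "hat a = {K\<in>X. a \<in> K}"

lemma hat_up: "hat a \<in> upsets X (\<subseteq>)"
  unfolding hat_def upsets_def by blast

lemma hat_m: assumes "a \<in> S" "b \<in> S" shows "hat (m a b) = hat a \<inter> hat b"
proof -
  have "K \<in> hat (m a b) \<longleftrightarrow> K \<in> hat a \<inter> hat b" for K
  proof
    assume "K \<in> hat (m a b)"
    hence K: "K \<in> X" "m a b \<in> K" unfolding hat_def by blast+
    show "K \<in> hat a \<inter> hat b" unfolding hat_def
      using K filt_m_D1[OF XD(1)[OF K(1)] assms K(2)] filt_m_D2[OF XD(1)[OF K(1)] assms K(2)] by blast
  next
    assume "K \<in> hat a \<inter> hat b"
    hence K: "K \<in> X" "a \<in> K" "b \<in> K" unfolding hat_def by blast+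
    show "K \<in> hat (m a b)" unfolding hat_def using K filtD(4)[OF XD(1)[OF K(1)] K(2,3)] by blast
  qed
  thus ?thesis by blast
qed

lemma hat_j: assumes orL: "SOr \<in> L" and ab: "a \<in> S" "b \<in> S" shows "hat (j a b) = hat a \<union> hat b"
proof -
  have jS: "j a b \<in> S" using j_S[OF orL ab] .
  have "K \<in> hat (j a b) \<longleftrightarrow> K \<in> hat a \<union> hat b" for K
  proof
    assume "K \<in> hat (j a b)"
    hence K: "K \<in> X" "j a b \<in> K" unfolding hat_def by blast+
    show "K \<in> hat a \<union> hat b" unfolding hat_def using prime[OF orL K(1) ab K(2)] K(1) by blast
  next
    assume "K \<in> hat a \<union> hat b"
    hence K: "K \<in> X" "a \<in> K \<or> b \<in> K" unfolding hat_def by blast+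
    have "le a (j a b)" "le b (j a b)" using le_j1 le_j2 ab sC by blast+
    thus "K \<in> hat (j a b)" unfolding hat_def using K filtD(3)[OF XD(1)[OF K(1)] _ jS] by blast
  qed
  thus ?thesis by blast
qed

lemma hat_i: assumes ab: "a \<in> S" "b \<in> S" and iS: "i a b \<in> S"
  shows "hat (i a b) = X - downclosure X (\<subseteq>) (hat a - hat b)"
proof -
  have aC: "a \<in> C" and bC: "b \<in> C" using ab sC by blast+
  have "K \<in> hat (i a b) \<longleftrightarrow> K \<in> X - downclosure X (\<subseteq>) (hat a - hat b)" for K
  proof
    assume "K \<in> hat (i a b)"
    hence K: "K \<in> X" "i a b \<in> K" unfolding hat_def by blast+
    have "K \<notin> downclosure X (\<subseteq>) (hat a - hat b)"
    proof
      assume "K \<in> downclosure X (\<subseteq>) (hat a - hat b)"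
      then obtain K' where K': "K' \<in> X" "K \<subseteq> K'" "a \<in> K'" "b \<notin> K'"
        unfolding downclosure_def hat_def by blast
      have "m a (i a b) \<in> K'" using filtD(4)[OF XD(1)[OF K'(1)] K'(3)] K K' by blast
      hence "b \<in> K'" using filtD(3)[OF XD(1)[OF K'(1)] _ ab(2) mp[OF aC bC]] by blast
      thus False using K' by blast
    qed
    thus "K \<in> X - downclosure X (\<subseteq>) (hat a - hat b)" using K by blast
  next
    assume A: "K \<in> X - downclosure X (\<subseteq>) (hat a - hat b)"
    hence K: "K \<in> X" by blast
    have fK: "filt K" and KS: "K \<subseteq> S" using XD[OF K] by blast+
    show "K \<in> hat (i a b)"
    proof (rule ccontr)
      assume "K \<notin> hat (i a b)"
      hence ni: "i a b \<notin> K" using K unfolding hat_def by blast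
      note ga = gen1[OF fK ab(1)]
      have dis: "gen K {a} \<inter> {b} = {}"
      proof (rule ccontr)
        assume "gen K {a} \<inter> {b} \<noteq> {}"
        hence "b \<in> gen K {a}" by blast
        then obtain k where k: "k \<in> K" "le (m k a) b" using gen_memD by blast
        have "le k (i a b)" using resid[OF aC bC] k KS sC by blast
        hence "i a b \<in> K" using filtD(3)[OF fK k(1) iS] by blast
        thus False using ni by blast
      qed
      have bS: "{b} \<subseteq> S" using ab by blast
      have dir: "\<And>e1 e2. e1 \<in> {b} \<Longrightarrow> e2 \<in> {b} \<Longrightarrow> \<exists>e\<in>{b}. le e1 e \<and> le e2 e"
        using le_refl[OF bC] by blast
      obtain K' where K': "K' \<in> X" "gen K {a} \<subseteq> K'" "K' \<inter> {b} = {}"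
        using zorn_ext[OF ga(1) bS _ dir dis] by blast
      have "K' \<in> hat a - hat b" using K' ga(3) unfolding hat_def by blast
      moreover have "K \<subseteq> K'" using K' ga(2) by blast
      ultimately have "K \<in> downclosure X (\<subseteq>) (hat a - hat b)" unfolding downclosure_def using K by blast
      thus False using A by blast
    qed
  qed
  thus ?thesis by blast
qed

lemma hat_bot: "bot H \<in> S \<Longrightarrow> hat (bot H) = {}"
  unfolding hat_def using bot_notin by blast

lemma hat_top: assumes "top H \<in> S" shows "hat (top H) = X"
proof -
  have "K \<in> hat (top H)" if K: "K \<in> X" for K
  proof -
    obtain k where k: "k \<in> K" using filtD(2)[OF XD(1)[OF K]] by blast
    have "le k (top H)" using le_top k XD(3)[OF K] sC by blast
    thus ?thesis unfolding hat_def using K k filtD(3)[OF XD(1)[OF K] k assms] by blast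
  qed
  thus ?thesis unfolding hat_def by blast
qed

lemma hat_n: assumes negL: "SNeg \<in> L" and a: "a \<in> S"
  shows "hat (neg H a) = X - downclosure X (\<subseteq>) (hat a)"
proof -
  have bS: "bot H \<in> S" using bot_S_neg[OF negL] .
  have "neg H a = i a (bot H)" using neg_eq a sC by blast
  moreover have "i a (bot H) \<in> S" using n_S[OF negL a] calculation by simp
  ultimately show ?thesis using hat_i[OF a bS] hat_bot[OF bS] by simp
qed

lemma rep: "syms \<phi> \<subseteq> L \<Longrightarrow> (\<forall>x. v x \<in> S) \<Longrightarrow>
   eval (Up X (\<subseteq>)) (\<lambda>x. hat (v x)) \<phi> = hat (eval H v \<phi>)"
proof (induction \<phi>)
  case (FVar x)
  then show ?case by simp
next
  case (FAnd a b)
  then show ?case using hat_m eval_S by (simp add: Up_simps)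
next
  case (FOr a b)
  then show ?case using hat_j eval_S by (simp add: Up_simps)
next
  case (FImp a b)
  hence "eval H v (FImp a b) \<in> S" using eval_S by blast
  then show ?case using FImp hat_i eval_S by (simp add: Up_simps)
next
  case (FNeg a)
  then show ?case using hat_n eval_S by (simp add: Up_simps)
next
  case FBot
  then show ?case using hat_bot b_S by (simp add: Up_simps)
next
  case FTop
  then show ?case using hat_top t_S by (simp add: Up_simps)
qed

lemma easy_dir:
  assumes V: "qeq_valid (Up X (\<subseteq>)) (upsets X (\<subseteq>)) (QEq \<phi>s y z)"
    and Ls: "\<forall>\<phi>\<in>set \<phi>s. syms \<phi> \<subseteq> L"
  shows "qeq_valid H S (QEq \<phi>s y z)"
  unfolding qeq_valid.simps
proof (intro allI impI)
  fix v assume v: "\<forall>x. v x \<in> S" and prem: "\<forall>\<phi>\<in>set \<phi>s. le (m (eval H v \<phi>) (v y)) (v z)"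
  show "le (v y) (v z)"
  proof (rule ccontr)
    assume nle: "\<not> le (v y) (v z)"
    obtain K where K: "K \<in> X" "v y \<in> K" "v z \<notin> K" using sep[OF _ _ nle] v by blast
    let ?V = "\<lambda>x. hat (v x)"
    have Vup: "\<forall>x. ?V x \<in> upsets X (\<subseteq>)" using hat_up by blast
    have "\<forall>\<phi>\<in>set \<phi>s. alg_le (Up X (\<subseteq>)) (meet (Up X (\<subseteq>)) (eval (Up X (\<subseteq>)) ?V \<phi>) (?V y)) (?V z)"
    proof
      fix \<phi> assume ph: "\<phi> \<in> set \<phi>s"
      have eS: "eval H v \<phi> \<in> S" using eval_S Ls ph v by blast
      have r: "eval (Up X (\<subseteq>)) ?V \<phi> = hat (eval H v \<phi>)" using rep Ls ph v by blast
      have l: "le (m (eval H v \<phi>) (v y)) (v z)" using prem ph by blast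
      have "hat (m (eval H v \<phi>) (v y)) \<subseteq> hat (v z)"
      proof
        fix K' assume "K' \<in> hat (m (eval H v \<phi>) (v y))"
        hence K': "K' \<in> X" "m (eval H v \<phi>) (v y) \<in> K'" unfolding hat_def by blast+
        show "K' \<in> hat (v z)" unfolding hat_def using filtD(3)[OF XD(1)[OF K'(1)] K'(2) _ l] v K' by blast
      qed
      hence "hat (eval H v \<phi>) \<inter> hat (v y) \<inter> hat (v z) = hat (eval H v \<phi>) \<inter> hat (v y)"
        using hat_m[OF eS] v by blast
      thus "alg_le (Up X (\<subseteq>)) (meet (Up X (\<subseteq>)) (eval (Up X (\<subseteq>)) ?V \<phi>) (?V y)) (?V z)"
        using r by (simp add: Up_le Up_simps)
    qed
    note P1 = this
    have all: "\<forall>v. (\<forall>x. v x \<in> upsets X (\<subseteq>)) \<longrightarrow>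
          (\<forall>\<phi>\<in>set \<phi>s. alg_le (Up X (\<subseteq>)) (meet (Up X (\<subseteq>)) (eval (Up X (\<subseteq>)) v \<phi>) (v y)) (v z)) \<longrightarrow>
          alg_le (Up X (\<subseteq>)) (v y) (v z)" using V by simp
    have "alg_le (Up X (\<subseteq>)) (?V y) (?V z)" using HOL.mp[OF HOL.mp[OF spec[OF all, of ?V] Vup] P1] .
    hence "hat (v y) \<inter> hat (v z) = hat (v y)" by (simp add: Up_le)
    moreover have "K \<in> hat (v y) - hat (v z)" using K unfolding hat_def by blast
    ultimately show False by blast
  qed
qed

end

locale HD = SR H L S for H :: "'a alg" and L S +
  fixes V :: "nat \<Rightarrow> 'a set set" and F :: "'a set"
  assumes Vup: "\<forall>x. V x \<in> upsets X (\<subseteq>)" and FX: "F \<in> X"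
begin

abbreviation "UA \<equiv> Up X (\<subseteq>)"

definition Cx :: "'a set set \<Rightarrow> nat \<Rightarrow> 'a set set" where "Cx Gs x = {G\<in>Gs. G \<in> V x}"
definition W :: "'a set set \<Rightarrow> nat \<Rightarrow> 'a set set" where "W Gs x = {K\<in>X. \<exists>G\<in>Cx Gs x. G \<subseteq> K}"
definition adm :: "'a set set \<Rightarrow> (nat \<Rightarrow> 'a) \<Rightarrow> bool" where
  "adm Gs w \<longleftrightarrow> (\<forall>x. w x \<in> S \<and> (\<forall>G\<in>Cx Gs x. w x \<in> G))"
definition okGs :: "'a set set \<Rightarrow> bool" where
  "okGs Gs \<longleftrightarrow> finite Gs \<and> Gs \<subseteq> X \<and> (\<forall>G\<in>Gs. F \<subseteq> G)"
definition good :: "'a set set \<Rightarrow> 'a set \<Rightarrow> bool" where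
  "good Gs K \<longleftrightarrow> (\<forall>x. (\<forall>G\<in>Cx Gs x. \<not> G \<subseteq> K) \<longrightarrow> (\<exists>c\<in>S. c \<notin> K \<and> (\<forall>G\<in>Cx Gs x. c \<in> G)))"
definition wm :: "(nat \<Rightarrow> 'a) \<Rightarrow> (nat \<Rightarrow> 'a) \<Rightarrow> nat \<Rightarrow> 'a" where
  "wm w1 w2 = (\<lambda>x. m (w1 x) (w2 x))"

lemma upK: "K \<in> X \<Longrightarrow> a \<in> K \<Longrightarrow> b \<in> S \<Longrightarrow> le a b \<Longrightarrow> b \<in> K"
  by (rule filtD(3)[OF XD(1)])
lemma notK: "K \<in> X \<Longrightarrow> b \<in> S \<Longrightarrow> b \<notin> K \<Longrightarrow> le a b \<Longrightarrow> a \<notin> K"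
  using upK by blast
lemma meetK: "K \<in> X \<Longrightarrow> a \<in> K \<Longrightarrow> b \<in> K \<Longrightarrow> m a b \<in> K"
  by (rule filtD(4)[OF XD(1)])
lemma KS: "K \<in> X \<Longrightarrow> K \<subseteq> S" using XD(3) by blast

lemma V_upsets: "V x \<subseteq> X \<and> (\<forall>u\<in>V x. \<forall>y\<in>X. u \<subseteq> y \<longrightarrow> y \<in> V x)"
proof -
  have "V x \<in> upsets X (\<subseteq>)" using Vup by (rule spec)
  thus ?thesis unfolding upsets_def by (rule CollectD)
qed
lemma V_X: "V x \<subseteq> X" using V_upsets by (rule conjunct1)
lemma V_up: assumes "G \<in> V x" "K \<in> X" "G \<subseteq> K" shows "K \<in> V x"
proof -
  have h: "\<forall>u\<in>V x. \<forall>y\<in>X. u \<subseteq> y \<longrightarrow> y \<in> V x" using V_upsets by (rule conjunct2)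
  show ?thesis using h[rule_format, OF assms] .
qed

lemma W_sub_V: "W Gs x \<subseteq> V x"
proof
  fix K assume "K \<in> W Gs x"
  then obtain G where "K \<in> X" "G \<in> V x" "G \<subseteq> K" unfolding W_def Cx_def by blast
  thus "K \<in> V x" using V_up by blast
qed

lemma W_X: "W Gs x \<subseteq> X" unfolding W_def by blast

lemma EW_X: "eval UA (W Gs) \<rho> \<subseteq> X"
  using evalU_sub[of "W Gs" X] W_X by blast

lemma Cx_fin: "okGs Gs \<Longrightarrow> finite (Cx Gs x)"
  unfolding okGs_def Cx_def by simp

lemma Cx_X: "okGs Gs \<Longrightarrow> G \<in> Cx Gs x \<Longrightarrow> G \<in> X"
  unfolding okGs_def Cx_def by blast

lemma Cx_F: "okGs Gs \<Longrightarrow> G \<in> Cx Gs x \<Longrightarrow> F \<subseteq> G"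
  unfolding okGs_def Cx_def by blast

lemma adm_S: "adm Gs w \<Longrightarrow> w x \<in> S" unfolding adm_def by blast
lemma adm_C: "adm Gs w \<Longrightarrow> \<forall>x. w x \<in> C" unfolding adm_def using sC by blast
lemma adm_Sall: "adm Gs w \<Longrightarrow> \<forall>x. w x \<in> S" unfolding adm_def by blast

lemma adm_ex: assumes "okGs Gs" shows "\<exists>w. adm Gs w"
proof -
  obtain f0 where f0: "f0 \<in> F" using filtD(2)[OF XD(1)[OF FX]] by blast
  have "adm Gs (\<lambda>_. f0)" unfolding adm_def
  proof (intro allI conjI ballI)
    show "f0 \<in> S" using f0 KS[OF FX] by blast
    fix x G assume "G \<in> Cx Gs x"
    thus "f0 \<in> G" using f0 Cx_F[OF assms] by blast
  qed
  thus ?thesis by blast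
qed

lemma adm_upd: assumes "okGs Gs" and c: "c \<in> S" "\<forall>G\<in>Cx Gs x. c \<in> G"
  shows "\<exists>w. adm Gs w \<and> w x = c"
proof -
  obtain f0 where f0: "f0 \<in> F" using filtD(2)[OF XD(1)[OF FX]] by blast
  have "adm Gs ((\<lambda>_. f0)(x := c))" unfolding adm_def
  proof (intro allI conjI ballI)
    fix y
    show "((\<lambda>_. f0)(x := c)) y \<in> S" using f0 KS[OF FX] c by (cases "y = x") auto
    fix G assume G: "G \<in> Cx Gs y"
    show "((\<lambda>_. f0)(x := c)) y \<in> G"
    proof (cases "y = x")
      case True thus ?thesis using c G by simp
    next
      case False thus ?thesis using f0 Cx_F[OF assms(1) G] by auto
    qed
  qed
  thus ?thesis by (intro exI[of _ "(\<lambda>_. f0)(x := c)"]) simp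
qed

lemma adm_wm: assumes "okGs Gs" "adm Gs w1" "adm Gs w2" shows "adm Gs (wm w1 w2)"
  unfolding adm_def wm_def
proof (intro allI conjI ballI)
  fix x show "m (w1 x) (w2 x) \<in> S" using m_S adm_S assms by blast
  fix G assume G: "G \<in> Cx Gs x"
  have "w1 x \<in> G" "w2 x \<in> G" using assms(2,3) G unfolding adm_def by blast+
  thus "m (w1 x) (w2 x) \<in> G" using meetK Cx_X[OF assms(1) G] by blast
qed

lemma wm_le1: "adm Gs w1 \<Longrightarrow> adm Gs w2 \<Longrightarrow> \<forall>x. le (wm w1 w2 x) (w1 x)"
  unfolding wm_def by (intro allI m_le1 adm_C[rule_format])
lemma wm_le2: "adm Gs w1 \<Longrightarrow> adm Gs w2 \<Longrightarrow> \<forall>x. le (wm w1 w2 x) (w2 x)"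
  unfolding wm_def by (intro allI m_le2 adm_C[rule_format])

lemma good_ubK: assumes "okGs Gs" "K \<in> X" "ub K" shows "good Gs K"
  unfolding good_def
proof (intro allI impI)
  fix x assume h: "\<forall>G\<in>Cx Gs x. \<not> G \<subseteq> K"
  have "\<forall>G\<in>Cx Gs x. filt G \<and> \<not> G \<subseteq> K"
  proof
    fix G assume G: "G \<in> Cx Gs x"
    have "filt G" using XD(1)[OF Cx_X[OF assms(1) G]] .
    thus "filt G \<and> \<not> G \<subseteq> K" using h G by blast
  qed
  thus "\<exists>c\<in>S. c \<notin> K \<and> (\<forall>G\<in>Cx Gs x. c \<in> G)" using good_ub[OF Cx_fin[OF assms(1)] assms(2,3)] by blast
qed

lemma good_FF: assumes "okGs Gs" shows "good Gs F"
  unfolding good_def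
proof (intro allI impI)
  fix x assume h: "\<forall>G\<in>Cx Gs x. \<not> G \<subseteq> F"
  have "\<forall>G\<in>Cx Gs x. filt G \<and> F \<subseteq> G \<and> G \<noteq> F"
  proof
    fix G assume G: "G \<in> Cx Gs x"
    have "filt G" using XD(1)[OF Cx_X[OF assms(1) G]] .
    moreover have "F \<subseteq> G" using Cx_F[OF assms(1) G] .
    ultimately show "filt G \<and> F \<subseteq> G \<and> G \<noteq> F" using h G by blast
  qed
  thus "\<exists>c\<in>S. c \<notin> F \<and> (\<forall>G\<in>Cx Gs x. c \<in> G)" using good_F[OF Cx_fin[OF assms(1)] FX] by blast
qed

lemma E_S: "adm Gs w \<Longrightarrow> syms \<rho> \<subseteq> L \<Longrightarrow> eval H w \<rho> \<in> S"
  by (rule eval_S[OF _ adm_Sall])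

lemma E_pos: "adm Gs w \<Longrightarrow> adm Gs w0 \<Longrightarrow> \<forall>x. le (w x) (w0 x) \<Longrightarrow> positive \<rho> \<Longrightarrow> le (eval H w \<rho>) (eval H w0 \<rho>)"
  by (rule eval_mono_pos[OF adm_C adm_C])
lemma E_neg: "adm Gs w \<Longrightarrow> adm Gs w0 \<Longrightarrow> \<forall>x. le (w x) (w0 x) \<Longrightarrow> negative \<rho> \<Longrightarrow> le (eval H w0 \<rho>) (eval H w \<rho>)"
  by (rule eval_mono_neg[OF adm_C adm_C])

lemma down_X: "K \<in> X \<Longrightarrow> K \<notin> X - downclosure X (\<subseteq>) A \<Longrightarrow> \<exists>K'. K' \<in> A \<and> K \<subseteq> K'"
  unfolding downclosure_def by blast

end

context HD
begin

lemma D_props: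
  assumes Gs: "okGs Gs" and pa: "positive a" and La: "syms a \<subseteq> L"
  defines "D \<equiv> (\<lambda>w. eval H w a) ` {w. adm Gs w}"
  shows "D \<subseteq> S" "D \<noteq> {}" "\<And>d1 d2. d1 \<in> D \<Longrightarrow> d2 \<in> D \<Longrightarrow> \<exists>d\<in>D. le d d1 \<and> le d d2"
proof -
  show "D \<subseteq> S" unfolding D_def using E_S La by blast
  show "D \<noteq> {}" unfolding D_def using adm_ex[OF Gs] by blast
  fix d1 d2 assume "d1 \<in> D" "d2 \<in> D"
  then obtain w1 w2 where w: "adm Gs w1" "adm Gs w2" "d1 = eval H w1 a" "d2 = eval H w2 a"
    unfolding D_def by blast
  have aw: "adm Gs (wm w1 w2)" using adm_wm[OF Gs w(1,2)] .
  have "le (eval H (wm w1 w2) a) d1" using E_pos[OF aw w(1) wm_le1[OF w(1,2)] pa] w by simp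
  moreover have "le (eval H (wm w1 w2) a) d2" using E_pos[OF aw w(2) wm_le2[OF w(1,2)] pa] w by simp
  moreover have "eval H (wm w1 w2) a \<in> D" unfolding D_def using aw by blast
  ultimately show "\<exists>d\<in>D. le d d1 \<and> le d d2" by blast
qed

lemma compact_imp:
  assumes Gs: "okGs Gs" and impL: "SImp \<in> L" and K: "K \<in> X"
    and KA: "K \<in> X - downclosure X (\<subseteq>) (eval UA (W Gs) a - eval UA (W Gs) b)"
    and IHa: "\<forall>K''\<in>X. good Gs K'' \<longrightarrow> K'' \<notin> eval UA (W Gs) a \<longrightarrow> (\<exists>w. adm Gs w \<and> eval H w a \<notin> K'')"
    and IHb: "\<forall>K''\<in>X. K'' \<in> eval UA (W Gs) b \<longrightarrow> (\<exists>w. adm Gs w \<and> eval H w b \<in> K'')"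
    and pa: "positive a" and nb: "negative b" and La: "syms a \<subseteq> L" and Lb: "syms b \<subseteq> L"
  shows "\<exists>w. adm Gs w \<and> i (eval H w a) (eval H w b) \<in> K"
proof (rule ccontr)
  assume nc: "\<not> ?thesis"
  define D where "D = (\<lambda>w. eval H w a) ` {w. adm Gs w}"
  define E where "E = (\<lambda>w. eval H w b) ` {w. adm Gs w}"
  note Dp = D_props[OF Gs pa La, folded D_def]
  have fK: "filt K" using XD(1)[OF K] .
  note G0 = gen_filt[OF fK Dp]
  have ES: "E \<subseteq> S" unfolding E_def using E_S Lb by blast
  have Ene: "E \<noteq> {}" unfolding E_def using adm_ex[OF Gs] by blast
  have Edir: "\<exists>e\<in>E. le e1 e \<and> le e2 e" if h: "e1 \<in> E" "e2 \<in> E" for e1 e2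
  proof -
    obtain w1 where w1: "adm Gs w1" "e1 = eval H w1 b" using h(1) unfolding E_def by blast
    obtain w2 where w2: "adm Gs w2" "e2 = eval H w2 b" using h(2) unfolding E_def by blast
    note w = w1(1) w2(1) w1(2) w2(2)
    have aw: "adm Gs (wm w1 w2)" using adm_wm[OF Gs w(1,2)] .
    have "le e1 (eval H (wm w1 w2) b)" using E_neg[OF aw w(1) wm_le1[OF w(1,2)] nb] w by simp
    moreover have "le e2 (eval H (wm w1 w2) b)" using E_neg[OF aw w(2) wm_le2[OF w(1,2)] nb] w by simp
    moreover have "eval H (wm w1 w2) b \<in> E" unfolding E_def using aw by blast
    ultimately show ?thesis by blast
  qed
  have dis: "gen K D \<inter> E = {}"
  proof (rule ccontr)
    assume "gen K D \<inter> E \<noteq> {}"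
    then obtain s where s: "s \<in> gen K D" "s \<in> E" by blast
    obtain k d where kd: "k \<in> K" "d \<in> D" "le (m k d) s" using gen_memD[OF s(1)] by blast
    obtain w1 where w1: "adm Gs w1" "d = eval H w1 a" using kd(2) unfolding D_def by blast
    obtain w2 where w2: "adm Gs w2" "s = eval H w2 b" using s(2) unfolding E_def by blast
    define w where "w = wm w1 w2"
    have aw: "adm Gs w" unfolding w_def using adm_wm[OF Gs w1(1) w2(1)] .
    have kC: "k \<in> C" using kd(1) KS[OF K] sC by blast
    have C1: "eval H w a \<in> C" "eval H w1 a \<in> C" "eval H w b \<in> C" "eval H w2 b \<in> C"
      using E_S[OF aw La] E_S[OF w1(1) La] E_S[OF aw Lb] E_S[OF w2(1) Lb] sC by blast+
    have "le (eval H w a) (eval H w1 a)" unfolding w_def using E_pos[OF aw[unfolded w_def] w1(1) wm_le1[OF w1(1) w2(1)] pa] .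
    hence "le (m k (eval H w a)) (m k (eval H w1 a))" using m_mono[OF kC C1(1) kC C1(2) le_refl[OF kC]] by blast
    hence "le (m k (eval H w a)) (eval H w2 b)"
      using le_trans[OF m_C[OF kC C1(1)] m_C[OF kC C1(2)] C1(4)] kd(3) w1(2) w2(2) by blast
    moreover have "le (eval H w2 b) (eval H w b)" unfolding w_def using E_neg[OF aw[unfolded w_def] w2(1) wm_le2[OF w1(1) w2(1)] nb] .
    ultimately have "le (m k (eval H w a)) (eval H w b)"
      using le_trans[OF m_C[OF kC C1(1)] C1(4) C1(3)] by blast
    hence "le k (i (eval H w a) (eval H w b))" using resid[OF C1(1) C1(3) kC] by blast
    moreover have "i (eval H w a) (eval H w b) \<in> S" using i_S[OF impL E_S[OF aw La] E_S[OF aw Lb]] .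
    ultimately have "i (eval H w a) (eval H w b) \<in> K" using upK[OF K kd(1)] by blast
    thus False using nc aw by blast
  qed
  obtain K'' where K'': "K'' \<in> X" "gen K D \<subseteq> K''" "K'' \<inter> E = {}"
    using zorn_ext[OF G0(1) ES Ene Edir dis] by blast
  have gK: "good Gs K''" using good_ubK[OF Gs K''(1) ub_imp[OF impL K''(1)]] .
  have KK: "K \<subseteq> K''" using G0(2) K''(2) by blast
  have inA: "K'' \<in> eval UA (W Gs) a"
  proof (rule ccontr)
    assume "K'' \<notin> eval UA (W Gs) a"
    then obtain w where w: "adm Gs w" "eval H w a \<notin> K''" using IHa K''(1) gK by blast
    have "eval H w a \<in> D" unfolding D_def using w by blast
    thus False using w G0(3) K''(2) by blast
  qed
  have "K'' \<in> eval UA (W Gs) b"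
  proof (rule ccontr)
    assume "K'' \<notin> eval UA (W Gs) b"
    hence "K \<in> downclosure X (\<subseteq>) (eval UA (W Gs) a - eval UA (W Gs) b)"
      unfolding downclosure_def using K inA KK by blast
    thus False using KA by blast
  qed
  then obtain w where w: "adm Gs w" "eval H w b \<in> K''" using IHb K''(1) by blast
  have "eval H w b \<in> E" unfolding E_def using w by blast
  thus False using w K''(3) by blast
qed

lemma compact_neg:
  assumes Gs: "okGs Gs" and negL: "SNeg \<in> L" and K: "K \<in> X"
    and KA: "K \<in> X - downclosure X (\<subseteq>) (eval UA (W Gs) a)"
    and IHa: "\<forall>K''\<in>X. good Gs K'' \<longrightarrow> K'' \<notin> eval UA (W Gs) a \<longrightarrow> (\<exists>w. adm Gs w \<and> eval H w a \<notin> K'')"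
    and pa: "positive a" and La: "syms a \<subseteq> L"
  shows "\<exists>w. adm Gs w \<and> neg H (eval H w a) \<in> K"
proof (rule ccontr)
  assume nc: "\<not> ?thesis"
  define D where "D = (\<lambda>w. eval H w a) ` {w. adm Gs w}"
  note Dp = D_props[OF Gs pa La, folded D_def]
  have fK: "filt K" using XD(1)[OF K] .
  note G0 = gen_filt[OF fK Dp]
  have botS: "bot H \<in> S" using bot_S_neg[OF negL] .
  have ES: "{bot H} \<subseteq> S" using botS by blast
  have Edir: "\<And>e1 e2. e1 \<in> {bot H} \<Longrightarrow> e2 \<in> {bot H} \<Longrightarrow> \<exists>e\<in>{bot H}. le e1 e \<and> le e2 e"
    using le_refl[OF bot_C] by blast
  have dis: "gen K D \<inter> {bot H} = {}"
  proof (rule ccontr)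
    assume "gen K D \<inter> {bot H} \<noteq> {}"
    hence "bot H \<in> gen K D" by blast
    then obtain k d where kd: "k \<in> K" "d \<in> D" "le (m k d) (bot H)" using gen_memD by blast
    obtain w where w: "adm Gs w" "d = eval H w a" using kd(2) unfolding D_def by blast
    have kC: "k \<in> C" using kd(1) KS[OF K] sC by blast
    have eC: "eval H w a \<in> C" and eS: "eval H w a \<in> S" using E_S[OF w(1) La] sC by blast+
    have "le k (i (eval H w a) (bot H))" using resid[OF eC bot_C kC] kd(3) w(2) by blast
    hence "le k (neg H (eval H w a))" using neg_eq[OF eC] by simp
    hence "neg H (eval H w a) \<in> K" using upK[OF K kd(1) n_S[OF negL eS]] by blast
    thus False using nc w by blast
  qed
  obtain K'' where K'': "K'' \<in> X" "gen K D \<subseteq> K''" "K'' \<inter> {bot H} = {}"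
      and mx: "\<forall>G. filt G \<and> K'' \<subseteq> G \<and> G \<inter> {bot H} = {} \<longrightarrow> G = K''"
    using zorn_ext[OF G0(1) ES _ Edir dis] by blast
  have gK: "good Gs K''" using good_ubK[OF Gs K''(1) ub_neg[OF negL K''(1) mx]] .
  have KK: "K \<subseteq> K''" using G0(2) K''(2) by blast
  have "K'' \<notin> eval UA (W Gs) a"
  proof
    assume "K'' \<in> eval UA (W Gs) a"
    hence "K \<in> downclosure X (\<subseteq>) (eval UA (W Gs) a)"
      unfolding downclosure_def using K KK by blast
    thus False using KA by blast
  qed
  then obtain w where w: "adm Gs w" "eval H w a \<notin> K''" using IHa K''(1) gK by blast
  have "eval H w a \<in> D" unfolding D_def using w by blast
  thus False using w G0(3) K''(2) by blast
qed

end

context HD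
begin

lemma PN:
  assumes Gs: "okGs Gs"
  shows "syms \<rho> \<subseteq> L \<Longrightarrow>
    (positive \<rho> \<longrightarrow> (\<forall>K\<in>X. good Gs K \<longrightarrow> K \<notin> eval UA (W Gs) \<rho> \<longrightarrow> (\<exists>w. adm Gs w \<and> eval H w \<rho> \<notin> K))) \<and>
    (negative \<rho> \<longrightarrow> (\<forall>K\<in>X. K \<in> eval UA (W Gs) \<rho> \<longrightarrow> (\<exists>w. adm Gs w \<and> eval H w \<rho> \<in> K)))"
proof (induction \<rho>)
  case (FVar x)
  have "\<exists>w. adm Gs w \<and> eval H w (FVar x) \<notin> K" if K: "K \<in> X" "good Gs K" "K \<notin> eval UA (W Gs) (FVar x)" for K
  proof -
    have "\<forall>G\<in>Cx Gs x. \<not> G \<subseteq> K" using K(1,3) unfolding W_def by simp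
    then obtain c where c: "c \<in> S" "c \<notin> K" "\<forall>G\<in>Cx Gs x. c \<in> G" using K(2) unfolding good_def by blast
    obtain w where "adm Gs w" "w x = c" using adm_upd[OF Gs c(1,3)] by blast
    thus ?thesis using c(2) by auto
  qed
  thus ?case by simp
next
  case (FAnd a b)
  have La: "syms a \<subseteq> L" and Lb: "syms b \<subseteq> L" using FAnd.prems by auto
  note IHa = FAnd.IH(1)[OF La] and IHb = FAnd.IH(2)[OF Lb]
  have P: "\<exists>w. adm Gs w \<and> eval H w (FAnd a b) \<notin> K"
    if pos: "positive (FAnd a b)" and K: "K \<in> X" "good Gs K" "K \<notin> eval UA (W Gs) (FAnd a b)" for K
  proof -
    have "K \<notin> eval UA (W Gs) a \<or> K \<notin> eval UA (W Gs) b" using K(3) by (simp add: Up_simps)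
    thus ?thesis
    proof
      assume "K \<notin> eval UA (W Gs) a"
      then obtain w where w: "adm Gs w" "eval H w a \<notin> K" using IHa pos K by auto
      have "m (eval H w a) (eval H w b) \<notin> K" using filt_m_D1[OF XD(1)[OF K(1)] E_S[OF w(1) La] E_S[OF w(1) Lb]] w(2) by blast
      thus ?thesis using w by auto
    next
      assume "K \<notin> eval UA (W Gs) b"
      then obtain w where w: "adm Gs w" "eval H w b \<notin> K" using IHb pos K by auto
      have "m (eval H w a) (eval H w b) \<notin> K" using filt_m_D2[OF XD(1)[OF K(1)] E_S[OF w(1) La] E_S[OF w(1) Lb]] w(2) by blast
      thus ?thesis using w by auto
    qed
  qed
  have N: "\<exists>w. adm Gs w \<and> eval H w (FAnd a b) \<in> K"
    if neg: "negative (FAnd a b)" and K: "K \<in> X" "K \<in> eval UA (W Gs) (FAnd a b)" for K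
  proof -
    have Ka: "K \<in> eval UA (W Gs) a" and Kb: "K \<in> eval UA (W Gs) b" using K(2) by (simp_all add: Up_simps)
    have na: "negative a" and nb: "negative b" using neg by simp_all
    obtain w1 where w1: "adm Gs w1" "eval H w1 a \<in> K" using IHa na K(1) Ka by blast
    obtain w2 where w2: "adm Gs w2" "eval H w2 b \<in> K" using IHb nb K(1) Kb by blast
    define w where "w = wm w1 w2"
    have aw: "adm Gs w" unfolding w_def using adm_wm[OF Gs w1(1) w2(1)] .
    have "le (eval H w1 a) (eval H w a)" unfolding w_def using E_neg[OF aw[unfolded w_def] w1(1) wm_le1[OF w1(1) w2(1)] na] .
    hence 1: "eval H w a \<in> K" using upK[OF K(1) w1(2) E_S[OF aw La]] by blast
    have "le (eval H w2 b) (eval H w b)" unfolding w_def using E_neg[OF aw[unfolded w_def] w2(1) wm_le2[OF w1(1) w2(1)] nb] .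
    hence 2: "eval H w b \<in> K" using upK[OF K(1) w2(2) E_S[OF aw Lb]] by blast
    show ?thesis using meetK[OF K(1) 1 2] aw by auto
  qed
  show ?case using P N by blast
next
  case (FOr a b)
  have La: "syms a \<subseteq> L" and Lb: "syms b \<subseteq> L" and orL: "SOr \<in> L" using FOr.prems by auto
  note IHa = FOr.IH(1)[OF La] and IHb = FOr.IH(2)[OF Lb]
  have P: "\<exists>w. adm Gs w \<and> eval H w (FOr a b) \<notin> K"
    if pos: "positive (FOr a b)" and K: "K \<in> X" "good Gs K" "K \<notin> eval UA (W Gs) (FOr a b)" for K
  proof -
    have Ka: "K \<notin> eval UA (W Gs) a" and Kb: "K \<notin> eval UA (W Gs) b" using K(3) by (simp_all add: Up_simps)
    have pa: "positive a" and pb: "positive b" using pos by simp_all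
    obtain w1 where w1: "adm Gs w1" "eval H w1 a \<notin> K" using IHa pa K(1,2) Ka by blast
    obtain w2 where w2: "adm Gs w2" "eval H w2 b \<notin> K" using IHb pb K(1,2) Kb by blast
    define w where "w = wm w1 w2"
    have aw: "adm Gs w" unfolding w_def using adm_wm[OF Gs w1(1) w2(1)] .
    have "le (eval H w a) (eval H w1 a)" unfolding w_def using E_pos[OF aw[unfolded w_def] w1(1) wm_le1[OF w1(1) w2(1)] pa] .
    hence 1: "eval H w a \<notin> K" using notK[OF K(1) E_S[OF w1(1) La] w1(2)] by blast
    have "le (eval H w b) (eval H w2 b)" unfolding w_def using E_pos[OF aw[unfolded w_def] w2(1) wm_le2[OF w1(1) w2(1)] pb] .
    hence 2: "eval H w b \<notin> K" using notK[OF K(1) E_S[OF w2(1) Lb] w2(2)] by blast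
    have "j (eval H w a) (eval H w b) \<notin> K" using prime[OF orL K(1) E_S[OF aw La] E_S[OF aw Lb]] 1 2 by blast
    thus ?thesis using aw by auto
  qed
  have N: "\<exists>w. adm Gs w \<and> eval H w (FOr a b) \<in> K"
    if neg: "negative (FOr a b)" and K: "K \<in> X" "K \<in> eval UA (W Gs) (FOr a b)" for K
  proof -
    have na: "negative a" and nb: "negative b" using neg by simp_all
    have "K \<in> eval UA (W Gs) a \<or> K \<in> eval UA (W Gs) b" using K(2) by (simp add: Up_simps)
    thus ?thesis
    proof
      assume "K \<in> eval UA (W Gs) a"
      then obtain w where w: "adm Gs w" "eval H w a \<in> K" using IHa na K(1) by blast
      have "le (eval H w a) (j (eval H w a) (eval H w b))" using le_j1 E_S[OF w(1) La] E_S[OF w(1) Lb] sC by blast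
      hence "j (eval H w a) (eval H w b) \<in> K" using upK[OF K(1) w(2) j_S[OF orL E_S[OF w(1) La] E_S[OF w(1) Lb]]] by blast
      thus ?thesis using w by auto
    next
      assume "K \<in> eval UA (W Gs) b"
      then obtain w where w: "adm Gs w" "eval H w b \<in> K" using IHb nb K(1) by blast
      have "le (eval H w b) (j (eval H w a) (eval H w b))" using le_j2 E_S[OF w(1) La] E_S[OF w(1) Lb] sC by blast
      hence "j (eval H w a) (eval H w b) \<in> K" using upK[OF K(1) w(2) j_S[OF orL E_S[OF w(1) La] E_S[OF w(1) Lb]]] by blast
      thus ?thesis using w by auto
    qed
  qed
  show ?case using P N by blast
next
  case (FImp a b)
  have La: "syms a \<subseteq> L" and Lb: "syms b \<subseteq> L" and impL: "SImp \<in> L" using FImp.prems by auto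
  note IHa = FImp.IH(1)[OF La] and IHb = FImp.IH(2)[OF Lb]
  have P: "\<exists>w. adm Gs w \<and> eval H w (FImp a b) \<notin> K"
    if pos: "positive (FImp a b)" and K: "K \<in> X" "good Gs K" "K \<notin> eval UA (W Gs) (FImp a b)" for K
  proof -
    have na: "negative a" and pb: "positive b" using pos by simp_all
    have "K \<notin> X - downclosure X (\<subseteq>) (eval UA (W Gs) a - eval UA (W Gs) b)" using K(3) by (simp add: Up_simps)
    then obtain K' where K': "K' \<in> eval UA (W Gs) a" "K' \<notin> eval UA (W Gs) b" "K \<subseteq> K'"
      using down_X[OF K(1)] by blast
    have K'X: "K' \<in> X" using K'(1) EW_X by blast
    have gK': "good Gs K'" using good_ubK[OF Gs K'X ub_imp[OF impL K'X]] .
    obtain w1 where w1: "adm Gs w1" "eval H w1 a \<in> K'" using IHa na K'X K'(1) by blast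
    obtain w2 where w2: "adm Gs w2" "eval H w2 b \<notin> K'" using IHb pb K'X gK' K'(2) by blast
    define w where "w = wm w1 w2"
    have aw: "adm Gs w" unfolding w_def using adm_wm[OF Gs w1(1) w2(1)] .
    have "le (eval H w1 a) (eval H w a)" unfolding w_def using E_neg[OF aw[unfolded w_def] w1(1) wm_le1[OF w1(1) w2(1)] na] .
    hence 1: "eval H w a \<in> K'" using upK[OF K'X w1(2) E_S[OF aw La]] by blast
    have "le (eval H w b) (eval H w2 b)" unfolding w_def using E_pos[OF aw[unfolded w_def] w2(1) wm_le2[OF w1(1) w2(1)] pb] .
    hence 2: "eval H w b \<notin> K'" using notK[OF K'X E_S[OF w2(1) Lb] w2(2)] by blast
    have C: "eval H w a \<in> C" "eval H w b \<in> C" using E_S[OF aw La] E_S[OF aw Lb] sC by blast+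
    have "i (eval H w a) (eval H w b) \<notin> K'"
    proof
      assume "i (eval H w a) (eval H w b) \<in> K'"
      hence "m (eval H w a) (i (eval H w a) (eval H w b)) \<in> K'" using meetK[OF K'X 1] by blast
      hence "eval H w b \<in> K'" using upK[OF K'X _ E_S[OF aw Lb] mp[OF C]] by blast
      thus False using 2 by blast
    qed
    hence "i (eval H w a) (eval H w b) \<notin> K" using K'(3) by blast
    thus ?thesis using aw by auto
  qed
  have N: "\<exists>w. adm Gs w \<and> eval H w (FImp a b) \<in> K"
    if neg: "negative (FImp a b)" and K: "K \<in> X" "K \<in> eval UA (W Gs) (FImp a b)" for K
  proof -
    have pa: "positive a" and nb: "negative b" using neg by simp_all
    have KA: "K \<in> X - downclosure X (\<subseteq>) (eval UA (W Gs) a - eval UA (W Gs) b)" using K(2) by (simp add: Up_simps)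
    have IHa': "\<forall>K''\<in>X. good Gs K'' \<longrightarrow> K'' \<notin> eval UA (W Gs) a \<longrightarrow> (\<exists>w. adm Gs w \<and> eval H w a \<notin> K'')"
      using IHa pa by blast
    have IHb': "\<forall>K''\<in>X. K'' \<in> eval UA (W Gs) b \<longrightarrow> (\<exists>w. adm Gs w \<and> eval H w b \<in> K'')"
      using IHb nb by blast
    show ?thesis using compact_imp[OF Gs impL K(1) KA IHa' IHb' pa nb La Lb] by simp
  qed
  show ?case using P N by blast
next
  case (FNeg a)
  have La: "syms a \<subseteq> L" and negL: "SNeg \<in> L" using FNeg.prems by auto
  note IHa = FNeg.IH[OF La]
  have P: "\<exists>w. adm Gs w \<and> eval H w (FNeg a) \<notin> K"
    if pos: "positive (FNeg a)" and K: "K \<in> X" "good Gs K" "K \<notin> eval UA (W Gs) (FNeg a)" for K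
  proof -
    have na: "negative a" using pos by simp
    have "K \<notin> X - downclosure X (\<subseteq>) (eval UA (W Gs) a)" using K(3) by (simp add: Up_simps)
    then obtain K' where K': "K' \<in> eval UA (W Gs) a" "K \<subseteq> K'" using down_X[OF K(1)] by blast
    have K'X: "K' \<in> X" using K'(1) EW_X by blast
    obtain w where w: "adm Gs w" "eval H w a \<in> K'" using IHa na K'X K'(1) by blast
    have eS: "eval H w a \<in> S" and eC: "eval H w a \<in> C" using E_S[OF w(1) La] sC by blast+
    have "neg H (eval H w a) \<notin> K'"
    proof
      assume "neg H (eval H w a) \<in> K'"
      hence "m (eval H w a) (neg H (eval H w a)) \<in> K'" using meetK[OF K'X w(2)] by blast
      hence "bot H \<in> K'" using upK[OF K'X _ bot_S_neg[OF negL] m_neg[OF eC]] by blast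
      thus False using bot_notin[OF K'X] by blast
    qed
    hence "neg H (eval H w a) \<notin> K" using K'(2) by blast
    thus ?thesis using w by auto
  qed
  have N: "\<exists>w. adm Gs w \<and> eval H w (FNeg a) \<in> K"
    if neg: "negative (FNeg a)" and K: "K \<in> X" "K \<in> eval UA (W Gs) (FNeg a)" for K
  proof -
    have pa: "positive a" using neg by simp
    have KA: "K \<in> X - downclosure X (\<subseteq>) (eval UA (W Gs) a)" using K(2) by (simp add: Up_simps)
    have IHa': "\<forall>K''\<in>X. good Gs K'' \<longrightarrow> K'' \<notin> eval UA (W Gs) a \<longrightarrow> (\<exists>w. adm Gs w \<and> eval H w a \<notin> K'')"
      using IHa pa by blast
    show ?thesis using compact_neg[OF Gs negL K(1) KA IHa' pa La] by simp
  qed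
  show ?case using P N by blast
next
  case FBot
  obtain w where w: "adm Gs w" using adm_ex[OF Gs] by blast
  have "\<forall>K\<in>X. eval H w FBot \<notin> K" using bot_notin by simp
  thus ?case using w by (auto simp: Up_simps)
next
  case FTop
  have tS: "top H \<in> S" using FTop.prems t_S by simp
  obtain w where w: "adm Gs w" using adm_ex[OF Gs] by blast
  have "top H \<in> K" if K: "K \<in> X" for K
  proof -
    obtain k where k: "k \<in> K" using filtD(2)[OF XD(1)[OF K]] by blast
    have "le k (top H)" using le_top k KS[OF K] sC by blast
    thus ?thesis using upK[OF K k tS] by blast
  qed
  thus ?case using w by (auto simp: Up_simps)
qed

end

context HD
begin

lemma le_wm1: "adm Gs w \<Longrightarrow> adm Gs w1 \<Longrightarrow> adm Gs w2 \<Longrightarrow> \<forall>x. le (w x) (wm w1 w2 x) \<Longrightarrow> \<forall>x. le (w x) (w1 x)"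
proof
  fix x assume a: "adm Gs w" "adm Gs w1" "adm Gs w2" "\<forall>x. le (w x) (wm w1 w2 x)"
  have C: "w x \<in> C" "w1 x \<in> C" "w2 x \<in> C" using a adm_C by blast+
  show "le (w x) (w1 x)" using le_trans[OF C(1) m_C[OF C(2) C(3)] C(2)] a(4) m_le1[OF C(2) C(3)] unfolding wm_def by blast
qed

lemma le_wm2: "adm Gs w \<Longrightarrow> adm Gs w1 \<Longrightarrow> adm Gs w2 \<Longrightarrow> \<forall>x. le (w x) (wm w1 w2 x) \<Longrightarrow> \<forall>x. le (w x) (w2 x)"
proof
  fix x assume a: "adm Gs w" "adm Gs w1" "adm Gs w2" "\<forall>x. le (w x) (wm w1 w2 x)"
  have C: "w x \<in> C" "w1 x \<in> C" "w2 x \<in> C" using a adm_C by blast+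
  show "le (w x) (w2 x)" using le_trans[OF C(1) m_C[OF C(2) C(3)] C(3)] a(4) m_le2[OF C(2) C(3)] unfolding wm_def by blast
qed

lemma okGs_empty: "okGs {}" unfolding okGs_def by simp
lemma okGs_single: "G \<in> X \<Longrightarrow> F \<subseteq> G \<Longrightarrow> okGs {G}" unfolding okGs_def by simp
lemma okGs_Un: "okGs A \<Longrightarrow> okGs B \<Longrightarrow> okGs (A \<union> B)" unfolding okGs_def by blast
lemma okGs_X: "okGs Gs \<Longrightarrow> G \<in> Gs \<Longrightarrow> G \<in> X" unfolding okGs_def by blast

lemma W_le_V: "\<forall>x. W Gs x \<subseteq> V x" using W_sub_V by blast

lemma EV_X: "eval UA V \<rho> \<subseteq> X"
  using evalU_sub[of V X] V_X by blast

lemma ANT: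
  assumes Gs: "okGs Gs"
  shows "sahlqvist_antecedent \<alpha> \<Longrightarrow> syms \<alpha> \<subseteq> L \<Longrightarrow> G \<in> Gs \<Longrightarrow> G \<in> eval UA V \<alpha> \<Longrightarrow>
    \<exists>w0. adm Gs w0 \<and> (\<forall>w. adm Gs w \<and> (\<forall>x. le (w x) (w0 x)) \<longrightarrow> eval H w \<alpha> \<in> G)"
proof (induction \<alpha> rule: sahlqvist_antecedent.induct)
  case (sa_var x)
  have "G \<in> Cx Gs x" using sa_var unfolding Cx_def by simp
  hence "\<forall>w. adm Gs w \<longrightarrow> w x \<in> G" unfolding adm_def by blast
  thus ?case using adm_ex[OF Gs] by auto
next
  case (sa_neg \<phi>)
  have GX: "G \<in> X" using okGs_X[OF Gs sa_neg.prems(2)] .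
  have "eval UA V \<phi> \<subseteq> eval UA (W Gs) \<phi>" using evalU_mono[OF W_le_V] sa_neg.hyps by blast
  hence "G \<in> eval UA (W Gs) \<phi>" using sa_neg.prems by blast
  then obtain w1 where w1: "adm Gs w1" "eval H w1 \<phi> \<in> G" using PN[OF Gs sa_neg.prems(1)] sa_neg.hyps GX by blast
  have "eval H w \<phi> \<in> G" if w: "adm Gs w" "\<forall>x. le (w x) (w1 x)" for w
  proof -
    have "le (eval H w1 \<phi>) (eval H w \<phi>)" using E_neg[OF w(1) w1(1) w(2) sa_neg.hyps] .
    thus ?thesis using upK[OF GX w1(2) E_S[OF w(1) sa_neg.prems(1)]] by blast
  qed
  thus ?case using w1 by blast
next
  case sa_bot
  then show ?case by (simp add: Up_simps)
next
  case sa_top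
  have GX: "G \<in> X" using okGs_X[OF Gs sa_top.prems(2)] .
  have tS: "top H \<in> S" using sa_top.prems t_S by simp
  obtain k where k: "k \<in> G" using filtD(2)[OF XD(1)[OF GX]] by blast
  have "le k (top H)" using le_top k KS[OF GX] sC by blast
  hence "top H \<in> G" using upK[OF GX k tS] by blast
  thus ?case using adm_ex[OF Gs] by auto
next
  case (sa_and \<phi> \<psi>)
  have GX: "G \<in> X" using okGs_X[OF Gs sa_and.prems(2)] .
  have L1: "syms \<phi> \<subseteq> L" and L2: "syms \<psi> \<subseteq> L" using sa_and.prems by auto
  have G1: "G \<in> eval UA V \<phi>" and G2: "G \<in> eval UA V \<psi>" using sa_and.prems by (simp_all add: Up_simps)
  obtain w1 where w1: "adm Gs w1" "\<forall>w. adm Gs w \<and> (\<forall>x. le (w x) (w1 x)) \<longrightarrow> eval H w \<phi> \<in> G"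
    using sa_and.IH(1)[OF L1 sa_and.prems(2) G1] by blast
  obtain w2 where w2: "adm Gs w2" "\<forall>w. adm Gs w \<and> (\<forall>x. le (w x) (w2 x)) \<longrightarrow> eval H w \<psi> \<in> G"
    using sa_and.IH(2)[OF L2 sa_and.prems(2) G2] by blast
  have aw: "adm Gs (wm w1 w2)" using adm_wm[OF Gs w1(1) w2(1)] .
  have "eval H w (FAnd \<phi> \<psi>) \<in> G" if w: "adm Gs w" "\<forall>x. le (w x) (wm w1 w2 x)" for w
  proof -
    have "eval H w \<phi> \<in> G" using w1(2) w le_wm1[OF w(1) w1(1) w2(1) w(2)] by blast
    moreover have "eval H w \<psi> \<in> G" using w2(2) w le_wm2[OF w(1) w1(1) w2(1) w(2)] by blast
    ultimately show ?thesis using meetK[OF GX] by simp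
  qed
  thus ?case using aw by blast
next
  case (sa_or \<phi> \<psi>)
  have GX: "G \<in> X" using okGs_X[OF Gs sa_or.prems(2)] .
  have L1: "syms \<phi> \<subseteq> L" and L2: "syms \<psi> \<subseteq> L" and orL: "SOr \<in> L" using sa_or.prems by auto
  have "G \<in> eval UA V \<phi> \<or> G \<in> eval UA V \<psi>" using sa_or.prems by (simp add: Up_simps)
  thus ?case
  proof
    assume G1: "G \<in> eval UA V \<phi>"
    obtain w1 where w1: "adm Gs w1" "\<forall>w. adm Gs w \<and> (\<forall>x. le (w x) (w1 x)) \<longrightarrow> eval H w \<phi> \<in> G"
      using sa_or.IH(1)[OF L1 sa_or.prems(2) G1] by blast
    have "eval H w (FOr \<phi> \<psi>) \<in> G" if w: "adm Gs w" "\<forall>x. le (w x) (w1 x)" for w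
    proof -
      have 1: "eval H w \<phi> \<in> G" using w1(2) w by blast
      have S: "eval H w \<phi> \<in> S" "eval H w \<psi> \<in> S" using E_S[OF w(1) L1] E_S[OF w(1) L2] .
      have "le (eval H w \<phi>) (j (eval H w \<phi>) (eval H w \<psi>))" using le_j1 S sC by blast
      thus ?thesis using upK[OF GX 1 j_S[OF orL S]] by simp
    qed
    thus ?case using w1 by blast
  next
    assume G2: "G \<in> eval UA V \<psi>"
    obtain w1 where w1: "adm Gs w1" "\<forall>w. adm Gs w \<and> (\<forall>x. le (w x) (w1 x)) \<longrightarrow> eval H w \<psi> \<in> G"
      using sa_or.IH(2)[OF L2 sa_or.prems(2) G2] by blast
    have "eval H w (FOr \<phi> \<psi>) \<in> G" if w: "adm Gs w" "\<forall>x. le (w x) (w1 x)" for w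
    proof -
      have 1: "eval H w \<psi> \<in> G" using w1(2) w by blast
      have S: "eval H w \<phi> \<in> S" "eval H w \<psi> \<in> S" using E_S[OF w(1) L1] E_S[OF w(1) L2] .
      have "le (eval H w \<psi>) (j (eval H w \<phi>) (eval H w \<psi>))" using le_j2 S sC by blast
      thus ?thesis using upK[OF GX 1 j_S[OF orL S]] by simp
    qed
    thus ?case using w1 by blast
  qed
qed

end

context HD
begin

definition Good0 :: "form \<Rightarrow> 'a set set \<Rightarrow> bool" where
  "Good0 \<phi> Gs0 \<longleftrightarrow> okGs Gs0 \<and> (\<forall>Gs. okGs Gs \<and> Gs0 \<subseteq> Gs \<longrightarrow>
      (\<exists>w0. adm Gs w0 \<and> (\<forall>w. adm Gs w \<and> (\<forall>x. le (w x) (w0 x)) \<longrightarrow> eval H w \<phi> \<notin> F)))"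

lemma notF_neg:
  assumes negL: "SNeg \<in> L" and G: "G \<in> X" "F \<subseteq> G" and aS: "a \<in> S" and aG: "a \<in> G"
  shows "neg H a \<notin> F"
proof
  assume "neg H a \<in> F"
  hence "neg H a \<in> G" using G by blast
  hence "m a (neg H a) \<in> G" using meetK[OF G(1) aG] by blast
  hence "bot H \<in> G" using upK[OF G(1) _ bot_S_neg[OF negL] m_neg[OF sC[OF aS]]] by blast
  thus False using bot_notin[OF G(1)] by blast
qed

lemma BODY:
  "sahlqvist_body \<phi> \<Longrightarrow> syms \<phi> \<subseteq> L \<Longrightarrow> F \<notin> eval UA V \<phi> \<Longrightarrow> \<exists>Gs0. Good0 \<phi> Gs0"
proof (induction \<phi> rule: sahlqvist_body.induct)
  case (sb_imp \<chi>)
  have L\<chi>: "syms \<chi> \<subseteq> L" using sb_imp.prems by blast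
  consider (pos) "positive \<chi>" | (neg) \<alpha> where "\<chi> = FNeg \<alpha>" "sahlqvist_antecedent \<alpha>"
    | (imp) \<alpha> \<pi> where "\<chi> = FImp \<alpha> \<pi>" "sahlqvist_antecedent \<alpha>" "positive \<pi>"
    using sb_imp.hyps unfolding sahlqvist_implication_def by blast
  then show ?case
  proof cases
    case pos
    have "Good0 \<chi> {}" unfolding Good0_def
    proof (intro conjI allI impI)
      show "okGs {}" by (rule okGs_empty)
      fix Gs assume "okGs Gs \<and> {} \<subseteq> Gs"
      hence Gs: "okGs Gs" by blast
      have "eval UA (W Gs) \<chi> \<subseteq> eval UA V \<chi>" using evalU_mono[OF W_le_V] pos by blast
      hence "F \<notin> eval UA (W Gs) \<chi>" using sb_imp.prems by blast
      then obtain w0 where w0: "adm Gs w0" "eval H w0 \<chi> \<notin> F"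
        using PN[OF Gs L\<chi>] pos FX good_FF[OF Gs] by blast
      have "eval H w \<chi> \<notin> F" if w: "adm Gs w" "\<forall>x. le (w x) (w0 x)" for w
        using notK[OF FX E_S[OF w0(1) L\<chi>] w0(2) E_pos[OF w(1) w0(1) w(2) pos]] .
      thus "\<exists>w0. adm Gs w0 \<and> (\<forall>w. adm Gs w \<and> (\<forall>x. le (w x) (w0 x)) \<longrightarrow> eval H w \<chi> \<notin> F)"
        using w0 by blast
    qed
    thus ?thesis by blast
  next
    case neg
    have L\<alpha>: "syms \<alpha> \<subseteq> L" and negL: "SNeg \<in> L" using L\<chi> neg by auto
    have "F \<notin> X - downclosure X (\<subseteq>) (eval UA V \<alpha>)" using sb_imp.prems neg by (simp add: Up_simps)
    then obtain G where G: "G \<in> eval UA V \<alpha>" "F \<subseteq> G" using down_X[OF FX] by blast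
    have GX: "G \<in> X" using G(1) EV_X by blast
    have "Good0 \<chi> {G}" unfolding Good0_def
    proof (intro conjI allI impI)
      show "okGs {G}" using okGs_single[OF GX G(2)] .
      fix Gs assume "okGs Gs \<and> {G} \<subseteq> Gs"
      hence Gs: "okGs Gs" and GG: "G \<in> Gs" by blast+
      obtain w0 where w0: "adm Gs w0" "\<forall>w. adm Gs w \<and> (\<forall>x. le (w x) (w0 x)) \<longrightarrow> eval H w \<alpha> \<in> G"
        using ANT[OF Gs neg(2) L\<alpha> GG G(1)] by blast
      have "eval H w \<chi> \<notin> F" if w: "adm Gs w" "\<forall>x. le (w x) (w0 x)" for w
        using notF_neg[OF negL GX G(2) E_S[OF w(1) L\<alpha>]] w0(2) w neg(1) by simp
      thus "\<exists>w0. adm Gs w0 \<and> (\<forall>w. adm Gs w \<and> (\<forall>x. le (w x) (w0 x)) \<longrightarrow> eval H w \<chi> \<notin> F)"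
        using w0 by blast
    qed
    thus ?thesis by blast
  next
    case imp
    have L\<alpha>: "syms \<alpha> \<subseteq> L" and L\<pi>: "syms \<pi> \<subseteq> L" and impL: "SImp \<in> L" using L\<chi> imp by auto
    have "F \<notin> X - downclosure X (\<subseteq>) (eval UA V \<alpha> - eval UA V \<pi>)" using sb_imp.prems imp by (simp add: Up_simps)
    then obtain G where G: "G \<in> eval UA V \<alpha>" "G \<notin> eval UA V \<pi>" "F \<subseteq> G" using down_X[OF FX] by blast
    have GX: "G \<in> X" using G(1) EV_X by blast
    have "Good0 \<chi> {G}" unfolding Good0_def
    proof (intro conjI allI impI)
      show "okGs {G}" using okGs_single[OF GX G(3)] .
      fix Gs assume "okGs Gs \<and> {G} \<subseteq> Gs"
      hence Gs: "okGs Gs" and GG: "G \<in> Gs" by blast+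
      obtain w1 where w1: "adm Gs w1" "\<forall>w. adm Gs w \<and> (\<forall>x. le (w x) (w1 x)) \<longrightarrow> eval H w \<alpha> \<in> G"
        using ANT[OF Gs imp(2) L\<alpha> GG G(1)] by blast
      have "eval UA (W Gs) \<pi> \<subseteq> eval UA V \<pi>" using evalU_mono[OF W_le_V] imp(3) by blast
      hence "G \<notin> eval UA (W Gs) \<pi>" using G(2) by blast
      moreover have "good Gs G" using good_ubK[OF Gs GX ub_imp[OF impL GX]] .
      ultimately obtain w2 where w2: "adm Gs w2" "eval H w2 \<pi> \<notin> G"
        using PN[OF Gs L\<pi>] imp(3) GX by blast
      have aw: "adm Gs (wm w1 w2)" using adm_wm[OF Gs w1(1) w2(1)] .
      have "eval H w \<chi> \<notin> F" if w: "adm Gs w" "\<forall>x. le (w x) (wm w1 w2 x)" for w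
      proof -
        have 1: "eval H w \<alpha> \<in> G" using w1(2) w le_wm1[OF w(1) w1(1) w2(1) w(2)] by blast
        have "le (eval H w \<pi>) (eval H w2 \<pi>)" using E_pos[OF w(1) w2(1) le_wm2[OF w(1) w1(1) w2(1) w(2)] imp(3)] .
        hence 2: "eval H w \<pi> \<notin> G" using notK[OF GX E_S[OF w2(1) L\<pi>] w2(2)] by blast
        have C: "eval H w \<alpha> \<in> C" "eval H w \<pi> \<in> C" using E_S[OF w(1) L\<alpha>] E_S[OF w(1) L\<pi>] sC by blast+
        have "i (eval H w \<alpha>) (eval H w \<pi>) \<notin> G"
        proof
          assume "i (eval H w \<alpha>) (eval H w \<pi>) \<in> G"
          hence "m (eval H w \<alpha>) (i (eval H w \<alpha>) (eval H w \<pi>)) \<in> G" using meetK[OF GX 1] by blast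
          hence "eval H w \<pi> \<in> G" using upK[OF GX _ E_S[OF w(1) L\<pi>] mp[OF C]] by blast
          thus False using 2 by blast
        qed
        thus ?thesis using G(3) imp(1) by auto
      qed
      thus "\<exists>w0. adm Gs w0 \<and> (\<forall>w. adm Gs w \<and> (\<forall>x. le (w x) (w0 x)) \<longrightarrow> eval H w \<chi> \<notin> F)"
        using aw by blast
    qed
    thus ?thesis by blast
  qed
next
  case (sb_and \<phi> \<psi>)
  have L1: "syms \<phi> \<subseteq> L" and L2: "syms \<psi> \<subseteq> L" using sb_and.prems by auto
  have "F \<notin> eval UA V \<phi> \<or> F \<notin> eval UA V \<psi>" using sb_and.prems by (simp add: Up_simps)
  thus ?case
  proof
    assume "F \<notin> eval UA V \<phi>"
    then obtain Gs0 where g: "Good0 \<phi> Gs0" using sb_and.IH(1) L1 by blast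
    have "Good0 (FAnd \<phi> \<psi>) Gs0" unfolding Good0_def
    proof (intro conjI allI impI)
      show "okGs Gs0" using g unfolding Good0_def by blast
      fix Gs assume Gs: "okGs Gs \<and> Gs0 \<subseteq> Gs"
      then obtain w0 where w0: "adm Gs w0" "\<forall>w. adm Gs w \<and> (\<forall>x. le (w x) (w0 x)) \<longrightarrow> eval H w \<phi> \<notin> F"
        using g unfolding Good0_def by blast
      have "eval H w (FAnd \<phi> \<psi>) \<notin> F" if w: "adm Gs w" "\<forall>x. le (w x) (w0 x)" for w
        using filt_m_D1[OF XD(1)[OF FX] E_S[OF w(1) L1] E_S[OF w(1) L2]] w0(2) w by auto
      thus "\<exists>w0. adm Gs w0 \<and> (\<forall>w. adm Gs w \<and> (\<forall>x. le (w x) (w0 x)) \<longrightarrow> eval H w (FAnd \<phi> \<psi>) \<notin> F)"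
        using w0 by blast
    qed
    thus ?thesis by blast
  next
    assume "F \<notin> eval UA V \<psi>"
    then obtain Gs0 where g: "Good0 \<psi> Gs0" using sb_and.IH(2) L2 by blast
    have "Good0 (FAnd \<phi> \<psi>) Gs0" unfolding Good0_def
    proof (intro conjI allI impI)
      show "okGs Gs0" using g unfolding Good0_def by blast
      fix Gs assume Gs: "okGs Gs \<and> Gs0 \<subseteq> Gs"
      then obtain w0 where w0: "adm Gs w0" "\<forall>w. adm Gs w \<and> (\<forall>x. le (w x) (w0 x)) \<longrightarrow> eval H w \<psi> \<notin> F"
        using g unfolding Good0_def by blast
      have "eval H w (FAnd \<phi> \<psi>) \<notin> F" if w: "adm Gs w" "\<forall>x. le (w x) (w0 x)" for w
        using filt_m_D2[OF XD(1)[OF FX] E_S[OF w(1) L1] E_S[OF w(1) L2]] w0(2) w by auto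
      thus "\<exists>w0. adm Gs w0 \<and> (\<forall>w. adm Gs w \<and> (\<forall>x. le (w x) (w0 x)) \<longrightarrow> eval H w (FAnd \<phi> \<psi>) \<notin> F)"
        using w0 by blast
    qed
    thus ?thesis by blast
  qed
next
  case (sb_or \<phi> \<psi>)
  have L1: "syms \<phi> \<subseteq> L" and L2: "syms \<psi> \<subseteq> L" and orL: "SOr \<in> L" using sb_or.prems by auto
  have F1: "F \<notin> eval UA V \<phi>" and F2: "F \<notin> eval UA V \<psi>" using sb_or.prems by (simp_all add: Up_simps)
  obtain Gs1 where g1: "Good0 \<phi> Gs1" using sb_or.IH(1) L1 F1 by blast
  obtain Gs2 where g2: "Good0 \<psi> Gs2" using sb_or.IH(2) L2 F2 by blast
  have "Good0 (FOr \<phi> \<psi>) (Gs1 \<union> Gs2)" unfolding Good0_def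
  proof (intro conjI allI impI)
    show "okGs (Gs1 \<union> Gs2)" using okGs_Un g1 g2 unfolding Good0_def by blast
    fix Gs assume Gs: "okGs Gs \<and> Gs1 \<union> Gs2 \<subseteq> Gs"
    obtain w1 where w1: "adm Gs w1" "\<forall>w. adm Gs w \<and> (\<forall>x. le (w x) (w1 x)) \<longrightarrow> eval H w \<phi> \<notin> F"
      using g1 Gs unfolding Good0_def by blast
    obtain w2 where w2: "adm Gs w2" "\<forall>w. adm Gs w \<and> (\<forall>x. le (w x) (w2 x)) \<longrightarrow> eval H w \<psi> \<notin> F"
      using g2 Gs unfolding Good0_def by blast
    have aw: "adm Gs (wm w1 w2)" using adm_wm[OF _ w1(1) w2(1)] Gs by blast
    have "eval H w (FOr \<phi> \<psi>) \<notin> F" if w: "adm Gs w" "\<forall>x. le (w x) (wm w1 w2 x)" for w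
    proof -
      have 1: "eval H w \<phi> \<notin> F" using w1(2) w le_wm1[OF w(1) w1(1) w2(1) w(2)] by blast
      have 2: "eval H w \<psi> \<notin> F" using w2(2) w le_wm2[OF w(1) w1(1) w2(1) w(2)] by blast
      show ?thesis using prime[OF orL FX E_S[OF w(1) L1] E_S[OF w(1) L2]] 1 2 by auto
    qed
    thus "\<exists>w0. adm Gs w0 \<and> (\<forall>w. adm Gs w \<and> (\<forall>x. le (w x) (w0 x)) \<longrightarrow> eval H w (FOr \<phi> \<psi>) \<notin> F)"
      using aw by blast
  qed
  thus ?case by blast
qed

lemma LIST:
  "\<forall>\<phi>\<in>set \<phi>s. sahlqvist_body \<phi> \<and> syms \<phi> \<subseteq> L \<and> F \<notin> eval UA V \<phi> \<Longrightarrow>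
   \<exists>Gs0. okGs Gs0 \<and> (\<forall>Gs. okGs Gs \<and> Gs0 \<subseteq> Gs \<longrightarrow>
      (\<exists>w0. adm Gs w0 \<and> (\<forall>w. adm Gs w \<and> (\<forall>x. le (w x) (w0 x)) \<longrightarrow> (\<forall>\<phi>\<in>set \<phi>s. eval H w \<phi> \<notin> F))))"
proof (induction \<phi>s)
  case Nil
  show ?case using okGs_empty adm_ex by auto
next
  case (Cons \<phi> \<phi>s)
  have p: "sahlqvist_body \<phi>" "syms \<phi> \<subseteq> L" "F \<notin> eval UA V \<phi>" using Cons.prems by auto
  obtain Gs1 where g1: "Good0 \<phi> Gs1" using BODY[OF p] by blast
  obtain Gs2 where g2: "okGs Gs2" and g2': "\<forall>Gs. okGs Gs \<and> Gs2 \<subseteq> Gs \<longrightarrow>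
      (\<exists>w0. adm Gs w0 \<and> (\<forall>w. adm Gs w \<and> (\<forall>x. le (w x) (w0 x)) \<longrightarrow> (\<forall>\<phi>\<in>set \<phi>s. eval H w \<phi> \<notin> F)))"
    using Cons.IH Cons.prems by auto
  have "okGs (Gs1 \<union> Gs2)" using okGs_Un g1 g2 unfolding Good0_def by blast
  moreover have "\<forall>Gs. okGs Gs \<and> Gs1 \<union> Gs2 \<subseteq> Gs \<longrightarrow>
      (\<exists>w0. adm Gs w0 \<and> (\<forall>w. adm Gs w \<and> (\<forall>x. le (w x) (w0 x)) \<longrightarrow> (\<forall>\<phi>'\<in>set (\<phi> # \<phi>s). eval H w \<phi>' \<notin> F)))"
  proof (intro allI impI)
    fix Gs assume Gs: "okGs Gs \<and> Gs1 \<union> Gs2 \<subseteq> Gs"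
    obtain w1 where w1: "adm Gs w1" "\<forall>w. adm Gs w \<and> (\<forall>x. le (w x) (w1 x)) \<longrightarrow> eval H w \<phi> \<notin> F"
      using g1 Gs unfolding Good0_def by blast
    obtain w2 where w2: "adm Gs w2" "\<forall>w. adm Gs w \<and> (\<forall>x. le (w x) (w2 x)) \<longrightarrow> (\<forall>\<phi>\<in>set \<phi>s. eval H w \<phi> \<notin> F)"
      using g2' Gs by blast
    have aw: "adm Gs (wm w1 w2)" using adm_wm[OF _ w1(1) w2(1)] Gs by blast
    have "\<forall>\<phi>'\<in>set (\<phi> # \<phi>s). eval H w \<phi>' \<notin> F" if w: "adm Gs w" "\<forall>x. le (w x) (wm w1 w2 x)" for w
    proof -
      have 1: "eval H w \<phi> \<notin> F" using w1(2) w le_wm1[OF w(1) w1(1) w2(1) w(2)] by blast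
      have 2: "\<forall>\<phi>\<in>set \<phi>s. eval H w \<phi> \<notin> F" using w2(2) w le_wm2[OF w(1) w1(1) w2(1) w(2)] by blast
      show ?thesis using 1 2 by simp
    qed
    thus "\<exists>w0. adm Gs w0 \<and> (\<forall>w. adm Gs w \<and> (\<forall>x. le (w x) (w0 x)) \<longrightarrow> (\<forall>\<phi>'\<in>set (\<phi> # \<phi>s). eval H w \<phi>' \<notin> F))"
      using aw by blast
  qed
  ultimately show ?case by blast
qed

lemma LIST_final:
  assumes "\<forall>\<phi>\<in>set \<phi>s. sahlqvist_body \<phi> \<and> syms \<phi> \<subseteq> L \<and> F \<notin> eval UA V \<phi>"
  shows "\<exists>w. (\<forall>x. w x \<in> S) \<and> (\<forall>\<phi>\<in>set \<phi>s. eval H w \<phi> \<notin> F)"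
proof -
  obtain Gs0 where g: "okGs Gs0" "\<forall>Gs. okGs Gs \<and> Gs0 \<subseteq> Gs \<longrightarrow>
      (\<exists>w0. adm Gs w0 \<and> (\<forall>w. adm Gs w \<and> (\<forall>x. le (w x) (w0 x)) \<longrightarrow> (\<forall>\<phi>\<in>set \<phi>s. eval H w \<phi> \<notin> F)))"
    using LIST[OF assms] by blast
  then obtain w0 where w0: "adm Gs0 w0" "\<forall>w. adm Gs0 w \<and> (\<forall>x. le (w x) (w0 x)) \<longrightarrow> (\<forall>\<phi>\<in>set \<phi>s. eval H w \<phi> \<notin> F)"
    by blast
  have "\<forall>x. le (w0 x) (w0 x)" using le_refl adm_C[OF w0(1)] by blast
  hence "\<forall>\<phi>\<in>set \<phi>s. eval H w0 \<phi> \<notin> F" using w0 by blast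
  thus ?thesis using adm_Sall[OF w0(1)] by blast
qed

end

lemma fo_holds_cong: "(\<forall>x\<in>fo_free \<tau>. g x = g' x) \<Longrightarrow> fo_holds Y lz g \<tau> = fo_holds Y lz g' \<tau>"
proof (induction \<tau> arbitrary: g g')
  case (FO_Ex x a)
  have "\<And>d. \<forall>y\<in>fo_free a. (g(x := d)) y = (g'(x := d)) y" using FO_Ex.prems by auto
  hence "\<And>d. fo_holds Y lz (g(x := d)) a = fo_holds Y lz (g'(x := d)) a" using FO_Ex.IH by blast
  then show ?case by simp
next
  case (FO_All x a)
  have "\<And>d. \<forall>y\<in>fo_free a. (g(x := d)) y = (g'(x := d)) y" using FO_All.prems by auto
  hence "\<And>d. fo_holds Y lz (g(x := d)) a = fo_holds Y lz (g'(x := d)) a" using FO_All.IH by blast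
  then show ?case by simp
next
  case (FO_Not a)
  then show ?case by simp
next
  case (FO_Conj a b)
  have h: "\<forall>x\<in>fo_free a. g x = g' x" "\<forall>x\<in>fo_free b. g x = g' x" using FO_Conj.prems by auto
  have "fo_holds Y lz g a = fo_holds Y lz g' a" using FO_Conj.IH(1)[OF h(1)] .
  moreover have "fo_holds Y lz g b = fo_holds Y lz g' b" using FO_Conj.IH(2)[OF h(2)] .
  ultimately show ?case by simp
next
  case (FO_Disj a b)
  have h: "\<forall>x\<in>fo_free a. g x = g' x" "\<forall>x\<in>fo_free b. g x = g' x" using FO_Disj.prems by auto
  have "fo_holds Y lz g a = fo_holds Y lz g' a" using FO_Disj.IH(1)[OF h(1)] .
  moreover have "fo_holds Y lz g b = fo_holds Y lz g' b" using FO_Disj.IH(2)[OF h(2)] .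
  ultimately show ?case by simp
next
  case (FO_Impl a b)
  have h: "\<forall>x\<in>fo_free a. g x = g' x" "\<forall>x\<in>fo_free b. g x = g' x" using FO_Impl.prems by auto
  have "fo_holds Y lz g a = fo_holds Y lz g' a" using FO_Impl.IH(1)[OF h(1)] .
  moreover have "fo_holds Y lz g b = fo_holds Y lz g' b" using FO_Impl.IH(2)[OF h(2)] .
  ultimately show ?case by simp
qed simp_all

lemma fo_holds_img:
  assumes inj: "inj f" and op: "\<forall>a b. lp (f a) (f b) \<longleftrightarrow> lz a b"
  shows "fo_holds (f ` Y) lp (f \<circ> g) \<tau> = fo_holds Y lz g \<tau>"
proof (induction \<tau> arbitrary: g)
  case (FO_Le x y)
  then show ?case using op by simp
next
  case (FO_Eq x y)
  then show ?case using inj by (simp add: inj_eq)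
next
  case (FO_Ex x a)
  have upd: "\<And>d. (f \<circ> g)(x := f d) = f \<circ> (g(x := d))" by (auto simp: fun_eq_iff)
  have "(\<exists>d\<in>f ` Y. fo_holds (f ` Y) lp ((f \<circ> g)(x := d)) a) = (\<exists>d\<in>Y. fo_holds (f ` Y) lp ((f \<circ> g)(x := f d)) a)"
    by blast
  also have "\<dots> = (\<exists>d\<in>Y. fo_holds (f ` Y) lp (f \<circ> (g(x := d))) a)" using upd by simp
  also have "\<dots> = (\<exists>d\<in>Y. fo_holds Y lz (g(x := d)) a)"
    by (rule bex_cong[OF refl], rule FO_Ex.IH)
  finally show ?case by (simp only: fo_holds.simps)
next
  case (FO_All x a)
  have upd: "\<And>d. (f \<circ> g)(x := f d) = f \<circ> (g(x := d))" by (auto simp: fun_eq_iff)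
  have "(\<forall>d\<in>f ` Y. fo_holds (f ` Y) lp ((f \<circ> g)(x := d)) a) = (\<forall>d\<in>Y. fo_holds (f ` Y) lp ((f \<circ> g)(x := f d)) a)"
    by blast
  also have "\<dots> = (\<forall>d\<in>Y. fo_holds (f ` Y) lp (f \<circ> (g(x := d))) a)" using upd by simp
  also have "\<dots> = (\<forall>d\<in>Y. fo_holds Y lz (g(x := d)) a)"
    by (rule ball_cong[OF refl], rule FO_All.IH)
  finally show ?case by (simp only: fo_holds.simps)
qed simp_all

lemma down_img:
  assumes inj: "inj f" and op: "\<forall>a b. lp (f a) (f b) \<longleftrightarrow> lz a b" and A: "A \<subseteq> Y"
  shows "downclosure (f ` Y) lp (f ` A) = f ` (downclosure Y lz A)"
  unfolding downclosure_def using op A by auto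

lemma evalU_img:
  assumes inj: "inj f" and op: "\<forall>a b. lp (f a) (f b) \<longleftrightarrow> lz a b" and v: "\<forall>x. v x \<subseteq> Y"
  shows "eval (Up (f ` Y) lp) (\<lambda>x. f ` (v x)) \<phi> = f ` (eval (Up Y lz) v \<phi>)"
proof (induction \<phi>)
  case (FAnd a b)
  then show ?case using inj by (simp add: Up_simps image_Int)
next
  case (FOr a b)
  then show ?case by (simp add: Up_simps image_Un)
next
  case (FImp a b)
  have s: "eval (Up Y lz) v a - eval (Up Y lz) v b \<subseteq> Y" using evalU_sub[OF v] by blast
  have "f ` Y - downclosure (f ` Y) lp (f ` eval (Up Y lz) v a - f ` eval (Up Y lz) v b)
      = f ` Y - downclosure (f ` Y) lp (f ` (eval (Up Y lz) v a - eval (Up Y lz) v b))"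
    using inj by (simp add: image_set_diff)
  also have "\<dots> = f ` Y - f ` (downclosure Y lz (eval (Up Y lz) v a - eval (Up Y lz) v b))"
    using down_img[OF inj op s] by simp
  also have "\<dots> = f ` (Y - downclosure Y lz (eval (Up Y lz) v a - eval (Up Y lz) v b))"
    using inj by (simp add: image_set_diff)
  finally show ?case using FImp by (simp add: Up_simps)
next
  case (FNeg a)
  have s: "eval (Up Y lz) v a \<subseteq> Y" using evalU_sub[OF v] by blast
  have "f ` Y - downclosure (f ` Y) lp (f ` eval (Up Y lz) v a)
      = f ` Y - f ` (downclosure Y lz (eval (Up Y lz) v a))"
    using down_img[OF inj op s] by simp
  also have "\<dots> = f ` (Y - downclosure Y lz (eval (Up Y lz) v a))"
    using inj by (simp add: image_set_diff)
  finally show ?case using FNeg by (simp add: Up_simps)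
qed (simp_all add: Up_simps)

lemma upsets_img:
  assumes op: "\<forall>a b. lp (f a) (f b) \<longleftrightarrow> lz a b" and U: "U \<in> upsets Y lz"
  shows "f ` U \<in> upsets (f ` Y) lp"
  using U op unfolding upsets_def by auto

lemma upsets_preimg:
  assumes op: "\<forall>a b. lp (f a) (f b) \<longleftrightarrow> lz a b" and U: "U \<in> upsets (f ` Y) lp"
  shows "f -` U \<inter> Y \<in> upsets Y lz" "f ` (f -` U \<inter> Y) = U"
  using U op unfolding upsets_def by auto

lemma img_eq3: assumes inj: "inj f"
  shows "(f ` A \<inter> f ` B \<inter> f ` C = f ` A \<inter> f ` B) \<longleftrightarrow> (A \<inter> B \<inter> C = A \<inter> B)"
proof -
  have 1: "f ` A \<inter> f ` B \<inter> f ` C = f ` (A \<inter> B \<inter> C)" by (simp add: image_Int[OF inj])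
  have 2: "f ` A \<inter> f ` B = f ` (A \<inter> B)" by (simp add: image_Int[OF inj])
  show ?thesis unfolding 1 by (subst 2) (rule inj_image_eq_iff[OF inj])
qed

lemma img_eq2: assumes inj: "inj f"
  shows "(f ` A \<inter> f ` B = f ` A) \<longleftrightarrow> (A \<inter> B = A)"
proof -
  have 2: "f ` A \<inter> f ` B = f ` (A \<inter> B)" by (simp add: image_Int[OF inj])
  show ?thesis unfolding 2 by (rule inj_image_eq_iff[OF inj])
qed

lemma qeq_img:
  assumes inj: "inj f" and op: "\<forall>a b. lp (f a) (f b) \<longleftrightarrow> lz a b"
  shows "qeq_valid (Up (f ` Y) lp) (upsets (f ` Y) lp) (QEq \<phi>s y z) \<longleftrightarrow> qeq_valid (Up Y lz) (upsets Y lz) (QEq \<phi>s y z)"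
proof -
  have key: "(\<forall>\<phi>\<in>set \<phi>s. alg_le (Up (f ` Y) lp) (meet (Up (f ` Y) lp) (eval (Up (f ` Y) lp) (\<lambda>x. f ` (v x)) \<phi>) (f ` v y)) (f ` v z))
      \<longleftrightarrow> (\<forall>\<phi>\<in>set \<phi>s. alg_le (Up Y lz) (meet (Up Y lz) (eval (Up Y lz) v \<phi>) (v y)) (v z))"
     and key2: "alg_le (Up (f ` Y) lp) (f ` v y) (f ` v z) \<longleftrightarrow> alg_le (Up Y lz) (v y) (v z)"
    if v: "\<forall>x. v x \<subseteq> Y" for v
  proof -
    have "eval (Up (f ` Y) lp) (\<lambda>x. f ` (v x)) \<phi> = f ` (eval (Up Y lz) v \<phi>)" for \<phi>
      using evalU_img[OF inj op v] .
    thus "(\<forall>\<phi>\<in>set \<phi>s. alg_le (Up (f ` Y) lp) (meet (Up (f ` Y) lp) (eval (Up (f ` Y) lp) (\<lambda>x. f ` (v x)) \<phi>) (f ` v y)) (f ` v z))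
      \<longleftrightarrow> (\<forall>\<phi>\<in>set \<phi>s. alg_le (Up Y lz) (meet (Up Y lz) (eval (Up Y lz) v \<phi>) (v y)) (v z))"
      by (simp only: Up_le Up_simps img_eq3[OF inj])
    show "alg_le (Up (f ` Y) lp) (f ` v y) (f ` v z) \<longleftrightarrow> alg_le (Up Y lz) (v y) (v z)"
      by (simp only: Up_le img_eq2[OF inj])
  qed
  show ?thesis
  proof
    assume A: "qeq_valid (Up (f ` Y) lp) (upsets (f ` Y) lp) (QEq \<phi>s y z)"
    show "qeq_valid (Up Y lz) (upsets Y lz) (QEq \<phi>s y z)"
      unfolding qeq_valid.simps
    proof (intro allI impI)
      fix v assume vu: "\<forall>x. v x \<in> upsets Y lz"
        and pr: "\<forall>\<phi>\<in>set \<phi>s. alg_le (Up Y lz) (meet (Up Y lz) (eval (Up Y lz) v \<phi>) (v y)) (v z)"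
      have vs: "\<forall>x. v x \<subseteq> Y" using vu unfolding upsets_def by blast
      have vu': "\<forall>x. f ` v x \<in> upsets (f ` Y) lp" using upsets_img[where f=f and lp=lp and lz=lz, OF op] vu by blast
      have P1: "\<forall>\<phi>\<in>set \<phi>s. alg_le (Up (f ` Y) lp) (meet (Up (f ` Y) lp) (eval (Up (f ` Y) lp) (\<lambda>x. f ` (v x)) \<phi>) (f ` v y)) (f ` v z)"
        using key[OF vs] pr by simp
      have "alg_le (Up (f ` Y) lp) (f ` v y) (f ` v z)"
        using HOL.mp[OF HOL.mp[OF spec[OF A[unfolded qeq_valid.simps], of "\<lambda>x. f ` (v x)"] vu'] P1] by simp
      thus "alg_le (Up Y lz) (v y) (v z)" using key2[OF vs] by blast
    qed
  next
    assume A: "qeq_valid (Up Y lz) (upsets Y lz) (QEq \<phi>s y z)"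
    show "qeq_valid (Up (f ` Y) lp) (upsets (f ` Y) lp) (QEq \<phi>s y z)"
      unfolding qeq_valid.simps
    proof (intro allI impI)
      fix v' assume vu: "\<forall>x. v' x \<in> upsets (f ` Y) lp"
        and pr: "\<forall>\<phi>\<in>set \<phi>s. alg_le (Up (f ` Y) lp) (meet (Up (f ` Y) lp) (eval (Up (f ` Y) lp) v' \<phi>) (v' y)) (v' z)"
      define v where "v = (\<lambda>x. f -` v' x \<inter> Y)"
      have vu0: "\<forall>x. v x \<in> upsets Y lz" unfolding v_def using upsets_preimg(1)[where f=f and lp=lp and lz=lz, OF op] vu by blast
      have vs: "\<forall>x. v x \<subseteq> Y" unfolding v_def by blast
      have vv: "v' = (\<lambda>x. f ` v x)"
      proof
        fix x
        show "v' x = f ` v x" unfolding v_def using upsets_preimg(2)[where f=f and lp=lp and lz=lz, OF op] vu by metis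
      qed
      have "\<forall>\<phi>\<in>set \<phi>s. alg_le (Up Y lz) (meet (Up Y lz) (eval (Up Y lz) v \<phi>) (v y)) (v z)"
        using key[OF vs] pr vv by simp
      hence "alg_le (Up Y lz) (v y) (v z)"
        using HOL.mp[OF HOL.mp[OF spec[OF A[unfolded qeq_valid.simps], of v] vu0]] by blast
      thus "alg_le (Up (f ` Y) lp) (v' y) (v' z)" using key2[OF vs] vv by simp
    qed
  qed
qed

lemma eval_cong: "(\<forall>x\<in>vars \<phi>. v x = v' x) \<Longrightarrow> eval G v \<phi> = eval G v' \<phi>"
  by (induction \<phi>) auto

context SR
begin

lemma hard_dir:
  assumes sq: "sahlqvist_qeq (QEq \<phi>s y z)" and lang: "qeq_in_language L (QEq \<phi>s y z)"
    and val: "qeq_valid H S (QEq \<phi>s y z)"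
  shows "qeq_valid (Up X (\<subseteq>)) (upsets X (\<subseteq>)) (QEq \<phi>s y z)"
  unfolding qeq_valid.simps
proof (intro allI impI)
  fix V assume Vup: "\<forall>x. V x \<in> upsets X (\<subseteq>)"
    and prem: "\<forall>\<phi>\<in>set \<phi>s. alg_le (Up X (\<subseteq>)) (meet (Up X (\<subseteq>)) (eval (Up X (\<subseteq>)) V \<phi>) (V y)) (V z)"
  show "alg_le (Up X (\<subseteq>)) (V y) (V z)"
  proof (rule ccontr)
    assume "\<not> alg_le (Up X (\<subseteq>)) (V y) (V z)"
    hence "V y \<inter> V z \<noteq> V y" by (simp add: Up_le)
    then obtain F where F: "F \<in> V y" "F \<notin> V z" by blast
    have "V y \<in> upsets X (\<subseteq>)" using Vup by blast
    hence FX: "F \<in> X" using F(1) unfolding upsets_def by blast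
    have notin: "F \<notin> eval (Up X (\<subseteq>)) V \<phi>" if ph: "\<phi> \<in> set \<phi>s" for \<phi>
    proof
      assume "F \<in> eval (Up X (\<subseteq>)) V \<phi>"
      moreover have "eval (Up X (\<subseteq>)) V \<phi> \<inter> V y \<inter> V z = eval (Up X (\<subseteq>)) V \<phi> \<inter> V y"
        using prem ph by (simp add: Up_le Up_simps)
      ultimately show False using F by blast
    qed
    interpret hd: HD H L S V F
      by unfold_locales (fact Vup, fact FX)
    have sqd: "\<phi>s \<noteq> []" "y \<noteq> z" "\<forall>\<phi>\<in>set \<phi>s. sahlqvist_body \<phi> \<and> y \<notin> vars \<phi> \<and> z \<notin> vars \<phi>"
      using sq by simp_all
    have Ls: "\<forall>\<phi>\<in>set \<phi>s. syms \<phi> \<subseteq> L" using lang by simp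
    have "\<forall>\<phi>\<in>set \<phi>s. sahlqvist_body \<phi> \<and> syms \<phi> \<subseteq> L \<and> F \<notin> eval (Up X (\<subseteq>)) V \<phi>"
      using sqd Ls notin by blast
    then obtain w where w: "\<forall>x. w x \<in> S" "\<forall>\<phi>\<in>set \<phi>s. eval H w \<phi> \<notin> F"
      using hd.LIST_final by blast
    have as: "set (map (\<lambda>\<phi>. eval H w \<phi>) \<phi>s) \<subseteq> S" using eval_S Ls w(1) by auto
    have an: "\<forall>a\<in>set (map (\<lambda>\<phi>. eval H w \<phi>) \<phi>s). a \<notin> F" using w(2) by auto
    obtain f c where fc: "f \<in> F" "c \<in> S" "c \<notin> F" "\<forall>a\<in>set (map (\<lambda>\<phi>. eval H w \<phi>) \<phi>s). le (m a f) c"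
      using list_comb[OF FX as an] by blast
    have fS: "f \<in> S" using fc(1) XD(3)[OF FX] by blast
    define u where "u = (w(y := f))(z := c)"
    have uS: "\<forall>x. u x \<in> S" unfolding u_def using w(1) fS fc(2) by simp
    have uy: "u y = f" and uz: "u z = c" unfolding u_def using sqd(2) by simp_all
    have ev: "eval H u \<phi> = eval H w \<phi>" if ph: "\<phi> \<in> set \<phi>s" for \<phi>
    proof (rule eval_cong)
      show "\<forall>x\<in>vars \<phi>. u x = w x" unfolding u_def using sqd(3) ph by auto
    qed
    have "\<forall>\<phi>\<in>set \<phi>s. le (m (eval H u \<phi>) (u y)) (u z)"
      using fc(4) ev uy uz by auto
    hence "le (u y) (u z)" using val uS by simp
    hence "le f c" using uy uz by simp
    hence "c \<in> F" using filtD(3)[OF XD(1)[OF FX] fc(1) fc(2)] by blast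
    thus False using fc(3) by blast
  qed
qed

end

theorem corollary5p12:
  fixes L :: "sym set" and \<Phi> :: qeq and H :: "'a alg" and S :: "'a set" and \<tau> :: fo
  assumes "SAnd \<in> L"
    and "sahlqvist_qeq \<Phi>"
    and "qeq_in_language L \<Phi>"
    and "subreduct L H S"
    and "correspondent TYPE('a set set) \<Phi> \<tau>"
  shows "qeq_valid H S \<Phi> \<longleftrightarrow> fo_models (dual_poset H S) (\<subseteq>) \<tau>"
proof -
  have ha: "heyting_algebra H" using assms(4) unfolding subreduct_def by blast
  interpret sr: SR H L S
    by unfold_locales (fact ha, fact assms(4), fact assms(1))
  obtain \<phi>s y z where \<Phi>: "\<Phi> = QEq \<phi>s y z" by (cases \<Phi>)
  have lang: "\<forall>\<phi>\<in>set \<phi>s. syms \<phi> \<subseteq> L" using assms(3) \<Phi> by simp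
  have eq1: "qeq_valid H S \<Phi> \<longleftrightarrow> qeq_valid (Up sr.X (\<subseteq>)) (upsets sr.X (\<subseteq>)) \<Phi>"
    using sr.easy_dir[OF _ lang] sr.hard_dir[OF _ assms(3)[unfolded \<Phi>]] assms(2) \<Phi> by blast
  define f :: "'a set \<Rightarrow> 'a set set" where "f = (\<lambda>K. {K})"
  define lp :: "'a set set \<Rightarrow> 'a set set \<Rightarrow> bool" where "lp = (\<lambda>A B. \<Union>A \<subseteq> \<Union>B)"
  have inj: "inj f" unfolding f_def inj_def by simp
  have op: "\<forall>a b. lp (f a) (f b) \<longleftrightarrow> a \<subseteq> b" unfolding f_def lp_def by simp
  have po: "is_poset (f ` sr.X) lp" unfolding is_poset_def lp_def f_def by auto
  have eq2: "qeq_valid (Up (f ` sr.X) lp) (upsets (f ` sr.X) lp) \<Phi> \<longleftrightarrow> qeq_valid (Up sr.X (\<subseteq>)) (upsets sr.X (\<subseteq>)) \<Phi>"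
    unfolding \<Phi> using qeq_img[OF inj op] .
  note cor = assms(5)[unfolded correspondent_def, THEN conjunct2]
  have eq3: "qeq_valid (Up (f ` sr.X) lp) (upsets (f ` sr.X) lp) \<Phi> \<longleftrightarrow> fo_models (f ` sr.X) lp \<tau>"
    using cor[rule_format, OF po] .
  have sent: "fo_free \<tau> = {}" using assms(5) unfolding correspondent_def fo_sentence_def by blast
  have "fo_models (f ` sr.X) lp \<tau> = fo_holds (f ` sr.X) lp (f \<circ> (\<lambda>_. undefined)) \<tau>"
    unfolding fo_models_def using fo_holds_cong[of \<tau>] sent by blast
  also have "\<dots> = fo_holds sr.X (\<subseteq>) (\<lambda>_. undefined) \<tau>" using fo_holds_img[OF inj op] .
  finally have eq4: "fo_models (f ` sr.X) lp \<tau> = fo_models sr.X (\<subseteq>) \<tau>" unfolding fo_models_def .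
  show ?thesis using eq1 eq2 eq3 eq4 sr.X_def by simp
qed

end
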